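(* For every $m\in\mathbb Z$, \[ \mathcal A=\bigcap_{k\in\mathbb Z}\mathcal T_k=\mathcal T_{m-1}\cap\mathcal T_m\cap\mathcal T_{m+1},\qquad\text{where }\mathcal T_k=\mathbb Z[\mathbb P][x_k^{\pm1},x_{k+1}^{\pm1}]. \]
   Context: Fix positive integers $\ell_1,\ell_2$ and independent variables $p_{i,k}$ ($i=1,2$, $1\le k\le\ell_i$), $p_{i,0}=1$. Let $\mathbb P$ be the group of Laurent monomials in the $p_{i,k}$ and $\mathbb Z[\mathbb P]$ its group ring; $\mathcal F=\mathbb Q(p_{i,k})(x_1,x_2)$ with $x_1,x_2$ independent. Put $P_1(z)=1+\sum_{k=1}^{\ell_1}p_{1,k}z^k$, $P_2(z)=1+\sum_{k=1}^{\ell_2}p_{2,k}z^k$, $\overline P_i(z)=z^{\ell_i}P_i(z^{-1})/p_{i,\ell_i}$. Define $x_k\in\mathcal F$ for all $k\in\mathbb Z$ from $x_1,x_2$ by $x_{k+1}x_{k-1}=P_1(x_k)$ if $k\equiv1$, $P_2(x_k)$ if $k\equiv2$, $\overline P_1(x_k)$ if $k\equiv3$, $\overline P_2(x_k)$ if $k\equiv0\pmod4$. Let $\mathcal A$ be the $\mathbb Z[\mathbb P]$-subalgebra of $\mathcal F$ generated by all $x_k$. *)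

theory Defs
  imports Complex_Main
begin

text \<open>Indeterminates: p_{1,k}, p_{2,k} and x_1, x_2.\<close>
datatype cvar = PV1 nat | PV2 nat | XV1 | XV2

definition cvars :: "nat \<Rightarrow> nat \<Rightarrow> cvar set" where
  "cvars l1 l2 = PV1 ` {1..l1} \<union> PV2 ` {1..l2} \<union> {XV1, XV2}"

fun cval :: "(nat \<Rightarrow> 'a) \<Rightarrow> (nat \<Rightarrow> 'a) \<Rightarrow> 'a \<Rightarrow> 'a \<Rightarrow> cvar \<Rightarrow> 'a" where
  "cval p1 p2 y1 y2 (PV1 k) = p1 k"
| "cval p1 p2 y1 y2 (PV2 k) = p2 k"
| "cval p1 p2 y1 y2 XV1 = y1"
| "cval p1 p2 y1 y2 XV2 = y2"

definition mono_eval :: "('i \<Rightarrow> 'a::comm_ring_1) \<Rightarrow> ('i \<Rightarrow> nat) \<Rightarrow> 'a" where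
  "mono_eval v e = (\<Prod>i\<in>{i. e i \<noteq> 0}. v i ^ e i)"

definition alg_indep_Q :: "'i set \<Rightarrow> ('i \<Rightarrow> 'a::field_char_0) \<Rightarrow> bool" where
  "alg_indep_Q I v \<longleftrightarrow>
     (\<forall>S c. finite S \<and> (\<forall>e\<in>S. finite {i. e i \<noteq> 0} \<and> {i. e i \<noteq> 0} \<subseteq> I) \<and>
            (\<Sum>e\<in>S. of_rat (c e) * mono_eval v e) = 0 \<longrightarrow> (\<forall>e\<in>S. c e = (0::rat)))"

text \<open>P(z) = 1 + sum_{k=1}^l p_k z^k and Pbar(z) = z^l P(1/z) / p_l (as a polynomial, p_0 = 1).\<close>
definition Ppol :: "nat \<Rightarrow> (nat \<Rightarrow> 'a::field) \<Rightarrow> 'a \<Rightarrow> 'a" where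
  "Ppol l p z = 1 + (\<Sum>k=1..l. p k * z ^ k)"

definition Pbar :: "nat \<Rightarrow> (nat \<Rightarrow> 'a::field) \<Rightarrow> 'a \<Rightarrow> 'a" where
  "Pbar l p z = (z ^ l + (\<Sum>k=1..l. p k * z ^ (l - k))) / p l"

definition exch :: "nat \<Rightarrow> nat \<Rightarrow> (nat \<Rightarrow> 'a::field) \<Rightarrow> (nat \<Rightarrow> 'a) \<Rightarrow> int \<Rightarrow> 'a \<Rightarrow> 'a" where
  "exch l1 l2 p1 p2 k z =
     (if k mod 4 = 1 then Ppol l1 p1 z
      else if k mod 4 = 2 then Ppol l2 p2 z
      else if k mod 4 = 3 then Pbar l1 p1 z
      else Pbar l2 p2 z)"

text \<open>Forward: pairs (x_{n+1}, x_{n+2}); backward: pairs (x_{1-n}, x_{2-n}).\<close>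
fun xfwd :: "nat \<Rightarrow> nat \<Rightarrow> (nat \<Rightarrow> 'a::field) \<Rightarrow> (nat \<Rightarrow> 'a) \<Rightarrow> 'a \<Rightarrow> 'a \<Rightarrow> nat \<Rightarrow> 'a \<times> 'a" where
  "xfwd l1 l2 p1 p2 y1 y2 0 = (y1, y2)"
| "xfwd l1 l2 p1 p2 y1 y2 (Suc n) =
     (let (a, b) = xfwd l1 l2 p1 p2 y1 y2 n
      in (b, exch l1 l2 p1 p2 (int n + 2) b / a))"

fun xbwd :: "nat \<Rightarrow> nat \<Rightarrow> (nat \<Rightarrow> 'a::field) \<Rightarrow> (nat \<Rightarrow> 'a) \<Rightarrow> 'a \<Rightarrow> 'a \<Rightarrow> nat \<Rightarrow> 'a \<times> 'a" where
  "xbwd l1 l2 p1 p2 y1 y2 0 = (y1, y2)"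
| "xbwd l1 l2 p1 p2 y1 y2 (Suc n) =
     (let (a, b) = xbwd l1 l2 p1 p2 y1 y2 n
      in (exch l1 l2 p1 p2 (1 - int n) a / b, a))"

text \<open>The cluster variables x_k, k in Z, with x_{k+1} x_{k-1} = (exchange polynomial)(x_k).\<close>
definition xseq :: "nat \<Rightarrow> nat \<Rightarrow> (nat \<Rightarrow> 'a::field) \<Rightarrow> (nat \<Rightarrow> 'a) \<Rightarrow> 'a \<Rightarrow> 'a \<Rightarrow> int \<Rightarrow> 'a" where
  "xseq l1 l2 p1 p2 y1 y2 k =
     (if k \<ge> 1 then fst (xfwd l1 l2 p1 p2 y1 y2 (nat (k - 1)))
      else fst (xbwd l1 l2 p1 p2 y1 y2 (nat (1 - k))))"

text \<open>The Z[P]-subalgebra generated by G, where Z[P] is the group ring of Laurent monomials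
  in the p_{i,k}: the subring generated by 1, the p_{i,k}^{+-1} and G.\<close>
inductive_set zp_alg :: "nat \<Rightarrow> nat \<Rightarrow> (nat \<Rightarrow> 'a::field) \<Rightarrow> (nat \<Rightarrow> 'a) \<Rightarrow> 'a set \<Rightarrow> 'a set"
  for l1 l2 p1 p2 G where
  gen: "g \<in> G \<Longrightarrow> g \<in> zp_alg l1 l2 p1 p2 G"
| one: "1 \<in> zp_alg l1 l2 p1 p2 G"
| par1: "1 \<le> k \<Longrightarrow> k \<le> l1 \<Longrightarrow> p1 k \<in> zp_alg l1 l2 p1 p2 G"
| par1i: "1 \<le> k \<Longrightarrow> k \<le> l1 \<Longrightarrow> inverse (p1 k) \<in> zp_alg l1 l2 p1 p2 G"
| par2: "1 \<le> k \<Longrightarrow> k \<le> l2 \<Longrightarrow> p2 k \<in> zp_alg l1 l2 p1 p2 G"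
| par2i: "1 \<le> k \<Longrightarrow> k \<le> l2 \<Longrightarrow> inverse (p2 k) \<in> zp_alg l1 l2 p1 p2 G"
| neg: "a \<in> zp_alg l1 l2 p1 p2 G \<Longrightarrow> - a \<in> zp_alg l1 l2 p1 p2 G"
| add: "a \<in> zp_alg l1 l2 p1 p2 G \<Longrightarrow> b \<in> zp_alg l1 l2 p1 p2 G \<Longrightarrow> a + b \<in> zp_alg l1 l2 p1 p2 G"
| mult: "a \<in> zp_alg l1 l2 p1 p2 G \<Longrightarrow> b \<in> zp_alg l1 l2 p1 p2 G \<Longrightarrow> a * b \<in> zp_alg l1 l2 p1 p2 G"

definition clusterA :: "nat \<Rightarrow> nat \<Rightarrow> (nat \<Rightarrow> 'a::field) \<Rightarrow> (nat \<Rightarrow> 'a) \<Rightarrow> 'a \<Rightarrow> 'a \<Rightarrow> 'a set" where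
  "clusterA l1 l2 p1 p2 y1 y2 = zp_alg l1 l2 p1 p2 (range (xseq l1 l2 p1 p2 y1 y2))"

definition Tk :: "nat \<Rightarrow> nat \<Rightarrow> (nat \<Rightarrow> 'a::field) \<Rightarrow> (nat \<Rightarrow> 'a) \<Rightarrow> 'a \<Rightarrow> 'a \<Rightarrow> int \<Rightarrow> 'a set" where
  "Tk l1 l2 p1 p2 y1 y2 k =
     (let x = xseq l1 l2 p1 p2 y1 y2
      in zp_alg l1 l2 p1 p2 {x k, inverse (x k), x (k + 1), inverse (x (k + 1))})"

end

theory Submission
  imports Defs "HOL-Computational_Algebra.Polynomial"
begin

definition rc :: "'a::comm_ring_1 set \<Rightarrow> bool" where
  "rc S \<longleftrightarrow> 1 \<in> S \<and> (\<forall>x\<in>S. \<forall>y\<in>S. x + y \<in> S \<and> x * y \<in> S) \<and> (\<forall>x\<in>S. - x \<in> S)"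

lemma rc_one: "rc S \<Longrightarrow> 1 \<in> S" by (simp add: rc_def)
lemma rc_add: "rc S \<Longrightarrow> x \<in> S \<Longrightarrow> y \<in> S \<Longrightarrow> x + y \<in> S" by (simp add: rc_def)
lemma rc_mult: "rc S \<Longrightarrow> x \<in> S \<Longrightarrow> y \<in> S \<Longrightarrow> x * y \<in> S" by (simp add: rc_def)
lemma rc_neg: "rc S \<Longrightarrow> x \<in> S \<Longrightarrow> - x \<in> S" by (simp add: rc_def)
lemma rc_zero: "rc S \<Longrightarrow> 0 \<in> S"
  using rc_add[of S 1 "-1"] rc_one rc_neg by fastforce
lemma rc_diff: "rc S \<Longrightarrow> x \<in> S \<Longrightarrow> y \<in> S \<Longrightarrow> x - y \<in> S"
  using rc_add rc_neg by (metis diff_conv_add_uminus)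
lemma rc_power: "rc S \<Longrightarrow> x \<in> S \<Longrightarrow> x ^ n \<in> S"
  by (induction n) (auto intro: rc_one rc_mult)
lemma rc_sum: "rc S \<Longrightarrow> (\<And>i. i \<in> A \<Longrightarrow> f i \<in> S) \<Longrightarrow> sum f A \<in> S"
  by (induction A rule: infinite_finite_induct) (auto intro: rc_zero rc_add)
lemma rc_prod: "rc S \<Longrightarrow> (\<And>i. i \<in> A \<Longrightarrow> f i \<in> S) \<Longrightarrow> prod f A \<in> S"
  by (induction A rule: infinite_finite_induct) (auto intro: rc_one rc_mult)

lemma zp_alg_rc: "rc (zp_alg l1 l2 p1 p2 G)"
  unfolding rc_def by (auto intro: zp_alg.intros)

lemma zp_alg_min:
  assumes "rc S" "G \<subseteq> S" "zp_alg l1 l2 p1 p2 {} \<subseteq> S"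
  shows "zp_alg l1 l2 p1 p2 G \<subseteq> S"
proof
  fix x assume "x \<in> zp_alg l1 l2 p1 p2 G"
  then show "x \<in> S"
  proof (induction rule: zp_alg.induct)
    case (gen g) then show ?case using assms by auto
  next
    case one then show ?case using assms rc_one by auto
  next
    case (par1 k) then show ?case using assms(3) zp_alg.par1 by blast
  next
    case (par1i k) then show ?case using assms(3) zp_alg.par1i by blast
  next
    case (par2 k) then show ?case using assms(3) zp_alg.par2 by blast
  next
    case (par2i k) then show ?case using assms(3) zp_alg.par2i by blast
  qed (auto intro: rc_neg rc_add rc_mult assms(1))
qed

lemma zp_alg_R: "zp_alg l1 l2 p1 p2 {} \<subseteq> zp_alg l1 l2 p1 p2 G"
proof
  fix x assume "x \<in> zp_alg l1 l2 p1 p2 {}"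
  then show "x \<in> zp_alg l1 l2 p1 p2 G"
    by (induction rule: zp_alg.induct) (auto intro: zp_alg.intros)
qed

lemma zp_alg_mono: "G \<subseteq> G' \<Longrightarrow> zp_alg l1 l2 p1 p2 G \<subseteq> zp_alg l1 l2 p1 p2 G'"
  by (rule zp_alg_min) (auto intro: zp_alg_rc zp_alg.gen zp_alg_R[THEN subsetD])

section \<open>Polynomials with coefficients in a subring\<close>

definition RP :: "'a::comm_ring_1 set \<Rightarrow> 'a poly set" where
  "RP S = {q. \<forall>i. coeff q i \<in> S}"

definition RPP :: "'a::comm_ring_1 set \<Rightarrow> 'a poly poly set" where
  "RPP S = {Q. \<forall>i. coeff Q i \<in> RP S}"

lemma RP_coeff: "q \<in> RP S \<Longrightarrow> coeff q i \<in> S" by (simp add: RP_def)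
lemma RPP_coeff: "Q \<in> RPP S \<Longrightarrow> coeff Q i \<in> RP S" by (simp add: RPP_def)

lemma RP_0: "rc S \<Longrightarrow> 0 \<in> RP S" by (simp add: RP_def rc_zero)
lemma RP_monom: "rc S \<Longrightarrow> c \<in> S \<Longrightarrow> monom c n \<in> RP S"
  by (simp add: RP_def coeff_monom rc_zero)
lemma RP_1: "rc S \<Longrightarrow> 1 \<in> RP S"
  by (metis RP_monom one_poly_eq_simps(1) monom_eq_1 rc_one)
lemma RP_add: "rc S \<Longrightarrow> p \<in> RP S \<Longrightarrow> q \<in> RP S \<Longrightarrow> p + q \<in> RP S"
  by (simp add: RP_def rc_add)
lemma RP_neg: "rc S \<Longrightarrow> p \<in> RP S \<Longrightarrow> - p \<in> RP S"
  by (simp add: RP_def rc_neg)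
lemma RP_diff: "rc S \<Longrightarrow> p \<in> RP S \<Longrightarrow> q \<in> RP S \<Longrightarrow> p - q \<in> RP S"
  by (simp add: RP_def rc_diff)
lemma RP_mult: "rc S \<Longrightarrow> p \<in> RP S \<Longrightarrow> q \<in> RP S \<Longrightarrow> p * q \<in> RP S"
  by (auto simp: RP_def coeff_mult intro!: rc_sum rc_mult)
lemma RP_smult: "rc S \<Longrightarrow> c \<in> S \<Longrightarrow> q \<in> RP S \<Longrightarrow> smult c q \<in> RP S"
  by (simp add: RP_def rc_mult)
lemma RP_power: "rc S \<Longrightarrow> p \<in> RP S \<Longrightarrow> p ^ n \<in> RP S"
  by (induction n) (auto intro: RP_1 RP_mult)
lemma RP_sum: "rc S \<Longrightarrow> (\<And>i. i \<in> A \<Longrightarrow> f i \<in> RP S) \<Longrightarrow> sum f A \<in> RP S"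
  by (induction A rule: infinite_finite_induct) (auto intro: RP_0 RP_add)
lemma RP_X: "rc S \<Longrightarrow> [:0,1:] \<in> RP S"
  by (metis RP_monom monom_altdef mult.right_neutral power_one_right rc_one smult_1_left)
lemma RP_pCons: "q \<in> RP S \<Longrightarrow> c \<in> S \<Longrightarrow> pCons c q \<in> RP S"
  by (auto simp: RP_def coeff_pCons split: nat.split)
lemma RP_pCons_iff: "pCons c q \<in> RP S \<longleftrightarrow> c \<in> S \<and> q \<in> RP S"
  by (auto simp: RP_def coeff_pCons split: nat.split)

lemma poly_mem: "rc S \<Longrightarrow> R0 \<subseteq> S \<Longrightarrow> q \<in> RP R0 \<Longrightarrow> z \<in> S \<Longrightarrow> poly q z \<in> S"
  by (auto simp: poly_altdef RP_def intro!: rc_sum rc_mult rc_power)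

lemma RPP_0: "rc S \<Longrightarrow> 0 \<in> RPP S" by (simp add: RPP_def RP_0)
lemma RPP_monom: "rc S \<Longrightarrow> c \<in> RP S \<Longrightarrow> monom c n \<in> RPP S"
  by (simp add: RPP_def coeff_monom RP_0)
lemma RPP_1: "rc S \<Longrightarrow> 1 \<in> RPP S"
  by (metis RPP_monom RP_1 monom_eq_1)
lemma RPP_add: "rc S \<Longrightarrow> p \<in> RPP S \<Longrightarrow> q \<in> RPP S \<Longrightarrow> p + q \<in> RPP S"
  by (simp add: RPP_def RP_add)
lemma RPP_neg: "rc S \<Longrightarrow> p \<in> RPP S \<Longrightarrow> - p \<in> RPP S"
  by (simp add: RPP_def RP_neg)
lemma RPP_diff: "rc S \<Longrightarrow> p \<in> RPP S \<Longrightarrow> q \<in> RPP S \<Longrightarrow> p - q \<in> RPP S"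
  by (simp add: RPP_def RP_diff)
lemma RPP_mult: "rc S \<Longrightarrow> p \<in> RPP S \<Longrightarrow> q \<in> RPP S \<Longrightarrow> p * q \<in> RPP S"
  by (auto simp: RPP_def coeff_mult intro!: RP_sum RP_mult)
lemma RPP_smult: "rc S \<Longrightarrow> c \<in> RP S \<Longrightarrow> q \<in> RPP S \<Longrightarrow> smult c q \<in> RPP S"
  by (simp add: RPP_def RP_mult)
lemma RPP_sum: "rc S \<Longrightarrow> (\<And>i. i \<in> A \<Longrightarrow> f i \<in> RPP S) \<Longrightarrow> sum f A \<in> RPP S"
  by (induction A rule: infinite_finite_induct) (auto intro: RPP_0 RPP_add)
lemma RPP_pCons_iff: "pCons c q \<in> RPP S \<longleftrightarrow> c \<in> RP S \<and> q \<in> RPP S"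
  by (auto simp: RPP_def coeff_pCons split: nat.split)

section \<open>Two-variable evaluation\<close>

definition ev :: "'a::comm_ring_1 \<Rightarrow> 'a \<Rightarrow> 'a poly poly \<Rightarrow> 'a" where
  "ev s t Q = poly (map_poly (\<lambda>q. poly q t) Q) s"

lemma ev_0[simp]: "ev s t 0 = 0" by (simp add: ev_def)
lemma ev_pCons[simp]: "ev s t (pCons q Q) = poly q t + s * ev s t Q"
  by (simp add: ev_def map_poly_pCons)
lemma ev_add[simp]: "ev s t (P + Q) = ev s t P + ev s t Q"
  by (induction P Q rule: poly_induct2) (simp_all add: algebra_simps)
lemma ev_smult[simp]: "ev s t (smult w Q) = poly w t * ev s t Q"
  by (induction Q) (simp_all add: algebra_simps)
lemma ev_mult[simp]: "ev s t (P * Q) = ev s t P * ev s t Q"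
  by (induction P) (simp_all add: algebra_simps)
lemma ev_neg[simp]: "ev s t (- P) = - ev s t P"
  by (induction P) (simp_all add: algebra_simps)
lemma ev_diff[simp]: "ev s t (P - Q) = ev s t P - ev s t Q"
  by (metis ev_add ev_neg diff_conv_add_uminus)
lemma ev_monom[simp]: "ev s t (monom w n) = poly w t * s ^ n"
  by (induction n) (simp_all add: monom_Suc monom_0)
lemma ev_1[simp]: "ev s t 1 = 1"
  by (metis ev_monom monom_eq_1 mult.right_neutral one_poly_eq_simps(1) poly_1 power_0)
lemma ev_sum: "ev s t (sum f A) = (\<Sum>i\<in>A. ev s t (f i))"
  by (induction A rule: infinite_finite_induct) simp_all
lemma ev_const: "ev s t [:w:] = poly w t"
  by simp

lemma poly_bounded: "degree q \<le> N \<Longrightarrow> poly q z = (\<Sum>j\<le>N. coeff q j * z ^ j)"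
  for q :: "'a::comm_ring_1 poly"
proof -
  assume N: "degree q \<le> N"
  have "poly q z = (\<Sum>j\<le>degree q. coeff q j * z ^ j)" by (rule poly_altdef)
  also have "\<dots> = (\<Sum>j\<le>N. coeff q j * z ^ j)"
    by (rule sum.mono_neutral_left) (use N in \<open>auto simp: coeff_eq_0\<close>)
  finally show ?thesis .
qed

lemma ev_bounded: "degree Q \<le> N \<Longrightarrow> ev s t Q = (\<Sum>i\<le>N. poly (coeff Q i) t * s ^ i)"
proof -
  assume "degree Q \<le> N"
  have "degree (map_poly (\<lambda>q. poly q t) Q) \<le> N"
    using \<open>degree Q \<le> N\<close> map_poly_degree_leq le_trans by blast
  then show ?thesis unfolding ev_def
    by (subst poly_bounded[of _ N]) (auto simp: coeff_map_poly)
qed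

lemma ev_mem: "rc S \<Longrightarrow> R0 \<subseteq> S \<Longrightarrow> Q \<in> RPP R0 \<Longrightarrow> s \<in> S \<Longrightarrow> t \<in> S \<Longrightarrow> ev s t Q \<in> S"
  by (auto simp: ev_bounded[OF order.refl] intro!: rc_sum rc_mult rc_power poly_mem[of S R0] RPP_coeff)

definition indep :: "'a::comm_ring_1 set \<Rightarrow> 'a \<Rightarrow> 'a \<Rightarrow> bool" where
  "indep R0 s t \<longleftrightarrow> (\<forall>Q \<in> RPP R0. ev s t Q = 0 \<longrightarrow> Q = 0)"

definition swapN :: "'a::comm_ring_1 poly poly \<Rightarrow> nat" where
  "swapN Q = (\<Sum>i\<le>degree Q. degree (coeff Q i))"

definition swapP :: "'a::comm_ring_1 poly poly \<Rightarrow> 'a poly poly" where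
  "swapP Q = (\<Sum>i\<le>degree Q. \<Sum>j\<le>swapN Q. monom (monom (coeff (coeff Q i) j) i) j)"

lemma swapN_ge: "degree (coeff Q i) \<le> swapN Q"
proof (cases "i \<le> degree Q")
  case True
  then show ?thesis unfolding swapN_def
    by (intro member_le_sum) auto
next
  case False
  then show ?thesis by (simp add: coeff_eq_0)
qed

lemma coeff_swapP: "coeff (coeff (swapP Q) j) i = coeff (coeff Q i) j"
proof -
  have "coeff (swapP Q) j = (\<Sum>i'\<le>degree Q. \<Sum>j'\<le>swapN Q. if j' = j then monom (coeff (coeff Q i') j') i' else 0)"
    by (simp only: swapP_def coeff_sum coeff_monom)
  also have "\<dots> = (\<Sum>i'\<le>degree Q. if j \<le> swapN Q then monom (coeff (coeff Q i') j) i' else 0)"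
    by (intro sum.cong refl) (simp add: sum.delta)
  finally have "coeff (coeff (swapP Q) j) i =
      (\<Sum>i'\<le>degree Q. coeff (if j \<le> swapN Q then monom (coeff (coeff Q i') j) i' else 0) i)"
    by (simp only: coeff_sum)
  also have "\<dots> = (\<Sum>i'\<le>degree Q. if j \<le> swapN Q then (if i' = i then coeff (coeff Q i') j else 0) else 0)"
    by (intro sum.cong refl) simp
  also have "\<dots> = (if j \<le> swapN Q \<and> i \<le> degree Q then coeff (coeff Q i) j else 0)"
    by (cases "j \<le> swapN Q") (simp_all add: sum.delta)
  also have "\<dots> = coeff (coeff Q i) j"
  proof -
    have "coeff (coeff Q i) j = 0" if "\<not> (j \<le> swapN Q \<and> i \<le> degree Q)"
    proof (cases "i \<le> degree Q")
      case True
      then have "j > swapN Q" using that by auto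
      then have "j > degree (coeff Q i)" using swapN_ge[of Q i] by auto
      then show ?thesis by (simp add: coeff_eq_0)
    next
      case False then show ?thesis by (simp add: coeff_eq_0)
    qed
    then show ?thesis by auto
  qed
  finally show ?thesis .
qed

lemma swapP_eq_0: "swapP Q = 0 \<Longrightarrow> Q = 0"
proof -
  assume "swapP Q = 0"
  then have "coeff (coeff Q i) j = 0" for i j
    by (metis coeff_swapP coeff_0)
  then show "Q = 0" by (metis coeff_0 poly_eqI)
qed

lemma ev_swapP: "ev t s (swapP Q) = ev s t Q"
proof -
  have "ev t s (swapP Q) = (\<Sum>i\<le>degree Q. \<Sum>j\<le>swapN Q. coeff (coeff Q i) j * s ^ i * t ^ j)"
    unfolding swapP_def by (simp add: ev_sum poly_monom)
  also have "\<dots> = (\<Sum>i\<le>degree Q. poly (coeff Q i) t * s ^ i)"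
    by (intro sum.cong refl) (subst poly_bounded[OF swapN_ge], simp add: sum_distrib_right sum_distrib_left mult_ac)
  also have "\<dots> = ev s t Q" by (simp add: ev_bounded[OF order.refl])
  finally show ?thesis .
qed

lemma RPP_swapP: "rc R0 \<Longrightarrow> Q \<in> RPP R0 \<Longrightarrow> swapP Q \<in> RPP R0"
  unfolding swapP_def
  by (intro RPP_sum RPP_monom RP_monom) (auto intro: RP_coeff RPP_coeff)

lemma indep_sym: "rc R0 \<Longrightarrow> indep R0 s t \<Longrightarrow> indep R0 t s"
  unfolding indep_def
proof (intro ballI impI)
  fix Q assume "rc R0" "\<forall>Q\<in>RPP R0. ev s t Q = 0 \<longrightarrow> Q = 0" "Q \<in> RPP R0" "ev t s Q = 0"
  then have "swapP Q \<in> RPP R0" "ev s t (swapP Q) = 0" using RPP_swapP ev_swapP[of s t Q] by auto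
  then have "swapP Q = 0" using \<open>\<forall>Q\<in>RPP R0. ev s t Q = 0 \<longrightarrow> Q = 0\<close> by blast
  then show "Q = 0" by (rule swapP_eq_0)
qed

lemma indep_nz1: "rc R0 \<Longrightarrow> indep R0 s t \<Longrightarrow> s \<noteq> 0"
proof
  assume "rc R0" "indep R0 s t" "s = 0"
  have "monom 1 1 \<in> RPP R0" by (intro RPP_monom RP_1 \<open>rc R0\<close>)
  moreover have "ev s t (monom 1 1) = 0" using \<open>s = 0\<close> by simp
  ultimately have "(monom 1 1 :: 'a poly poly) = 0" using \<open>indep R0 s t\<close> unfolding indep_def by blast
  then show False by simp
qed

lemma indep_poly_nz: "rc R0 \<Longrightarrow> indep R0 s t \<Longrightarrow> q \<in> RP R0 \<Longrightarrow> q \<noteq> 0 \<Longrightarrow> poly q t \<noteq> 0"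
proof
  assume "rc R0" "indep R0 s t" "q \<in> RP R0" "q \<noteq> 0" "poly q t = 0"
  have "monom q 0 \<in> RPP R0" by (intro RPP_monom \<open>rc R0\<close> \<open>q \<in> RP R0\<close>)
  moreover have "ev s t (monom q 0) = 0" using \<open>poly q t = 0\<close> by simp
  ultimately have "monom q 0 = 0" using \<open>indep R0 s t\<close> unfolding indep_def by blast
  then show False using \<open>q \<noteq> 0\<close> by simp
qed

lemma indep_nz2: "rc R0 \<Longrightarrow> indep R0 s t \<Longrightarrow> t \<noteq> 0"
  using indep_poly_nz[of R0 s t "[:0,1:]"] RP_X by fastforce


lemma QL:
  assumes "rc R0" "V \<in> RP R0" "coeff V 0 = 1" "q \<in> RP R0" "q = V * g"
  shows "g \<in> RP R0"
proof -
  have "coeff g n \<in> R0" for n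
  proof (induction n rule: less_induct)
    case (less n)
    show ?case
    proof (cases n)
      case 0
      then have "coeff q 0 = coeff g 0" using assms(3,5) by (simp add: coeff_mult)
      then show ?thesis using assms(4) RP_coeff 0 by metis
    next
      case (Suc n')
      have "coeff q n = (\<Sum>i\<le>Suc n'. coeff V i * coeff g (Suc n' - i))"
        using assms(5) Suc by (simp add: coeff_mult)
      also have "\<dots> = coeff g n + (\<Sum>i\<le>n'. coeff V (Suc i) * coeff g (n' - i))"
        by (subst sum.atMost_Suc_shift) (simp add: assms(3) Suc)
      finally have e: "coeff g n = coeff q n - (\<Sum>i\<le>n'. coeff V (Suc i) * coeff g (n' - i))"
        by simp
      have "(\<Sum>i\<le>n'. coeff V (Suc i) * coeff g (n' - i)) \<in> R0"
        by (intro rc_sum rc_mult assms(1) RP_coeff[OF assms(2)] less) (use Suc in auto)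
      then show ?thesis unfolding e by (intro rc_diff assms(1) RP_coeff[OF assms(4)])
    qed
  qed
  then show ?thesis by (simp add: RP_def)
qed

lemma Xdiv:
  fixes q0 p W :: "'a::field poly"
  assumes "[:0,1:] ^ M' * q0 = [:0,1:] ^ M * p * W" "poly W 0 \<noteq> 0"
  shows "\<exists>g. q0 = W * g"
proof (cases "M' \<le> M")
  case True
  then have "[:0,1:] ^ M' * q0 = [:0,1:] ^ M' * ([:0,1:] ^ (M - M') * p * W)"
    using assms(1) by (metis (no_types, lifting) le_add_diff_inverse mult.assoc power_add)
  then have "q0 = [:0,1:] ^ (M - M') * p * W" by simp
  then show ?thesis by (metis mult.commute)
next
  case False
  define n where "n = M' - M"
  have "([:0,1:]::'a poly) ^ M' = [:0,1:] ^ M * [:0,1:] ^ n"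
    using False by (simp add: n_def flip: power_add)
  then have "[:0,1:] ^ M * ([:0,1:] ^ n * q0) = [:0,1:] ^ M * (p * W)"
    using assms(1) by (simp add: mult.assoc)
  then have e: "[:0,1:] ^ n * q0 = p * W" by simp
  show ?thesis
  proof (cases "p = 0")
    case True then show ?thesis using e by simp
  next
    case False
    have W0: "W \<noteq> 0" using assms(2) by auto
    have "[:-0,1:] ^ n dvd p * W" using e by (metis dvd_triv_left minus_zero)
    then have "n \<le> order 0 (p * W)" using False W0 order_divides[of 0 n "p * W"] by simp
    also have "order 0 (p * W) = order 0 p + order 0 W" using False W0 by (simp add: order_mult)
    also have "order 0 W = 0" using assms(2) order_root by blast
    finally have "[:-0,1:] ^ n dvd p" using order_divides[of 0 n p] by simp
    then obtain p' where "p = [:0,1:] ^ n * p'" by (auto elim: dvdE)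
    then have "[:0,1:] ^ n * q0 = [:0,1:] ^ n * (p' * W)" using e by (simp add: mult.assoc)
    then have "q0 = p' * W" by simp
    then show ?thesis by (metis mult.commute)
  qed
qed

lemma SH:
  assumes "rc S" "R0 \<subseteq> S" "q \<in> RP R0" "s \<in> S" "t \<in> S"
  shows "\<exists>w\<in>S. poly q (s + t) = poly q s + t * w"
  using assms(3)
proof (induction q rule: pCons_induct)
  case 0 then show ?case using rc_zero[OF assms(1)] by (intro bexI[of _ 0]) auto
next
  case (pCons c q)
  then have q: "q \<in> RP R0" and c: "c \<in> R0" by (auto simp: RP_pCons_iff)
  obtain w where w: "w \<in> S" "poly q (s + t) = poly q s + t * w" using pCons.IH q by blast
  have "poly q (s + t) \<in> S" by (intro poly_mem[OF assms(1,2) q] rc_add[OF assms(1)] assms(4,5))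
  then have "s * w + poly q (s + t) \<in> S" using w(1) assms by (intro rc_add rc_mult) auto
  moreover have "poly (pCons c q) (s + t) = poly (pCons c q) s + t * (s * w + poly q (s + t))"
    using w(2) by (simp add: algebra_simps)
  ultimately show ?case by blast
qed

lemma T1:
  fixes a b :: "'a::field"
  assumes "rc R0" "indep R0 a b" "G \<in> RP R0" "G \<noteq> 0" "d = poly G b / a"
  shows "indep R0 d b"
  unfolding indep_def
proof (intro ballI impI)
  fix Q assume Q: "Q \<in> RPP R0" "ev d b Q = 0"
  have a0: "a \<noteq> 0" using indep_nz1[OF assms(1,2)] .
  define D where "D = degree Q"
  define Q' where "Q' = (\<Sum>j\<le>D. monom (coeff Q j * G ^ j) (D - j))"
  have "ev a b Q' = (\<Sum>j\<le>D. poly (coeff Q j) b * poly G b ^ j * a ^ (D - j))"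
    unfolding Q'_def by (simp add: ev_sum poly_power)
  also have "\<dots> = (\<Sum>j\<le>D. a ^ D * (poly (coeff Q j) b * d ^ j))"
  proof (intro sum.cong refl)
    fix j assume "j \<in> {..D}"
    then have "a ^ D = a ^ (D - j) * a ^ j" by (simp flip: power_add)
    moreover have "d ^ j * a ^ j = poly G b ^ j"
      using a0 assms(5) by (simp add: power_divide)
    ultimately show "poly (coeff Q j) b * poly G b ^ j * a ^ (D - j) = a ^ D * (poly (coeff Q j) b * d ^ j)"
      by (metis (no_types, lifting) mult.assoc mult.commute)
  qed
  also have "\<dots> = a ^ D * ev d b Q"
    by (simp add: ev_bounded[of Q D] D_def sum_distrib_left algebra_simps)
  finally have "ev a b Q' = 0" using Q(2) by simp
  moreover have "Q' \<in> RPP R0" unfolding Q'_def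
    by (intro RPP_sum RPP_monom RP_mult RP_power assms(1,3) RPP_coeff Q(1))
  ultimately have Q'0: "Q' = 0" using assms(2) unfolding indep_def by blast
  have "coeff Q j = 0" for j
  proof (cases "j \<le> D")
    case True
    have "coeff Q' (D - j) = (\<Sum>j'\<le>D. if j' = j then coeff Q j' * G ^ j' else 0)"
      unfolding Q'_def coeff_sum coeff_monom
      by (intro sum.cong refl) (use True in auto)
    also have "\<dots> = coeff Q j * G ^ j" using True by simp
    finally have "coeff Q j * G ^ j = 0" using Q'0 by simp
    then show ?thesis using assms(4) by simp
  next
    case False then show ?thesis by (simp add: D_def coeff_eq_0)
  qed
  then show "Q = 0" by (simp add: poly_eqI)
qed

definition Tset :: "'a::field set \<Rightarrow> 'a \<Rightarrow> 'a \<Rightarrow> 'a set" where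
  "Tset R0 s t = {y. \<exists>Q L M. Q \<in> RPP R0 \<and> y = ev s t Q / (s ^ L * t ^ M)}"

lemma Tset_add:
  fixes s t :: "'a::field"
  assumes "s \<noteq> 0" "t \<noteq> 0"
  shows "ev s t Q1 / (s ^ L1 * t ^ M1) + ev s t Q2 / (s ^ L2 * t ^ M2) =
    ev s t (smult ([:0,1:] ^ M2) (monom 1 L2 * Q1) + smult ([:0,1:] ^ M1) (monom 1 L1 * Q2)) / (s ^ (L1 + L2) * t ^ (M1 + M2))"
  using assms by (simp add: field_simps power_add)

lemma Tset_rc:
  fixes s t :: "'a::field"
  assumes "rc R0" "s \<noteq> 0" "t \<noteq> 0"
  shows "rc (Tset R0 s t)"
  unfolding rc_def
proof (intro conjI ballI)
  show "1 \<in> Tset R0 s t" unfolding Tset_def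
    by (rule CollectI, rule exI[of _ 1], rule exI[of _ 0], rule exI[of _ 0]) (simp add: RPP_1 assms)
next
  fix x y assume "x \<in> Tset R0 s t" "y \<in> Tset R0 s t"
  then obtain Q1 L1 M1 Q2 L2 M2 where Q: "Q1 \<in> RPP R0" "x = ev s t Q1 / (s ^ L1 * t ^ M1)"
    "Q2 \<in> RPP R0" "y = ev s t Q2 / (s ^ L2 * t ^ M2)" unfolding Tset_def by blast
  have X: "[:0,1:] ^ n \<in> RP R0" for n by (intro RP_power RP_X assms)
  have m: "monom 1 n \<in> RPP R0" for n by (intro RPP_monom RP_1 assms)
  have "smult ([:0,1:] ^ M2) (monom 1 L2 * Q1) + smult ([:0,1:] ^ M1) (monom 1 L1 * Q2) \<in> RPP R0"
    by (intro RPP_add RPP_smult RPP_mult X m Q(1,3) assms(1))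
  then show "x + y \<in> Tset R0 s t" unfolding Tset_def Q(2,4) Tset_add[OF assms(2,3)]
    by blast
next
  fix x y assume "x \<in> Tset R0 s t" "y \<in> Tset R0 s t"
  then obtain Q1 L1 M1 Q2 L2 M2 where Q: "Q1 \<in> RPP R0" "x = ev s t Q1 / (s ^ L1 * t ^ M1)"
    "Q2 \<in> RPP R0" "y = ev s t Q2 / (s ^ L2 * t ^ M2)" unfolding Tset_def by blast
  have "x * y = ev s t (Q1 * Q2) / (s ^ (L1 + L2) * t ^ (M1 + M2))"
    unfolding Q(2,4) by (simp add: power_add)
  moreover have "Q1 * Q2 \<in> RPP R0" by (intro RPP_mult Q(1,3) assms(1))
  ultimately show "x * y \<in> Tset R0 s t" unfolding Tset_def by blast
next
  fix x assume "x \<in> Tset R0 s t"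
  then obtain Q1 L1 M1 where Q: "Q1 \<in> RPP R0" "x = ev s t Q1 / (s ^ L1 * t ^ M1)"
    unfolding Tset_def by blast
  have "- x = ev s t (- Q1) / (s ^ L1 * t ^ M1)" unfolding Q by simp
  moreover have "- Q1 \<in> RPP R0" by (intro RPP_neg Q(1) assms(1))
  ultimately show "- x \<in> Tset R0 s t" unfolding Tset_def by blast
qed

lemma T_rep:
  fixes s t :: "'a::field"
  assumes "s \<noteq> 0" "t \<noteq> 0"
  shows "zp_alg l1 l2 p1 p2 {s, inverse s, t, inverse t} \<subseteq> Tset (zp_alg l1 l2 p1 p2 {}) s t"
proof (rule zp_alg_min)
  let ?R = "zp_alg l1 l2 p1 p2 {}"
  have rcR: "rc ?R" by (rule zp_alg_rc)
  show rcT: "rc (Tset ?R s t)" by (rule Tset_rc[OF rcR assms])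
  have m: "monom (monom 1 1) 0 \<in> RPP ?R" "monom 1 1 \<in> RPP ?R" "1 \<in> RPP ?R"
    by (intro RPP_monom RP_monom RP_1 RPP_1 rc_one rcR)+
  have "s \<in> Tset ?R s t" unfolding Tset_def
    by (rule CollectI, rule exI[of _ "monom 1 1"], rule exI[of _ 0], rule exI[of _ 0]) (use m in simp)
  moreover have "inverse s \<in> Tset ?R s t" unfolding Tset_def
    by (rule CollectI, rule exI[of _ "1"], rule exI[of _ 1], rule exI[of _ 0]) (simp add: m field_simps)
  moreover have "t \<in> Tset ?R s t" unfolding Tset_def
    by (rule CollectI, rule exI[of _ "monom (monom 1 1) 0"], rule exI[of _ 0], rule exI[of _ 0]) (use m in \<open>simp add: poly_monom\<close>)
  moreover have "inverse t \<in> Tset ?R s t" unfolding Tset_def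
    by (rule CollectI, rule exI[of _ "1"], rule exI[of _ 0], rule exI[of _ 1]) (simp add: m field_simps)
  ultimately show "{s, inverse s, t, inverse t} \<subseteq> Tset ?R s t" by auto
  show "?R \<subseteq> Tset ?R s t"
  proof
    fix r assume r: "r \<in> ?R"
    have "monom (monom r 0) 0 \<in> RPP ?R" by (intro RPP_monom RP_monom rcR r)
    then show "r \<in> Tset ?R s t" unfolding Tset_def
      by (intro CollectI exI[of _ "monom (monom r 0) 0"] exI[of _ 0]) (simp add: poly_monom)
  qed
qed

lemma ColCond:
  fixes s t w :: "'a::field"
  assumes rcR: "rc R0" and ind: "indep R0 s t" and W: "W \<in> RP R0" "coeff W 0 = 1"
    and w: "w = poly W t / s"
    and Q: "Q \<in> RPP R0" and P: "P \<in> RPP R0"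
    and eq: "ev s t Q / (s ^ L * t ^ M) = ev w t P / (w ^ K * t ^ M')"
  shows "\<exists>g\<in>RP R0. coeff Q 0 = W ^ L * g"
proof -
  have s0: "s \<noteq> 0" by (rule indep_nz1[OF rcR ind])
  have t0: "t \<noteq> 0" by (rule indep_nz2[OF rcR ind])
  have W0: "W \<noteq> 0" using W(2) by auto
  have Wt0: "poly W t \<noteq> 0" by (rule indep_poly_nz[OF rcR ind W(1) W0])
  have w0: "w \<noteq> 0" using Wt0 s0 w by simp
  have ws: "w * s = poly W t" using w s0 by simp
  define D where "D = degree P"
  define X :: "'a poly" where "X = [:0,1:]"
  have pX: "poly X t = t" by (simp add: X_def)
  have XR: "X \<in> RP R0" by (simp add: X_def RP_X rcR)
  define QL where "QL = smult (W ^ K * X ^ M') (monom 1 D * Q)"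
  define QR where "QR = (\<Sum>j\<le>D. monom (X ^ M * coeff P j * W ^ j) (L + K + D - j))"
  have e1: "ev s t Q * w ^ K * t ^ M' = ev w t P * s ^ L * t ^ M"
    using eq s0 t0 w0 by (simp add: field_simps)
  have "ev s t QL = ev s t Q * (w * s) ^ K * t ^ M' * s ^ D"
    unfolding QL_def ws by (simp add: pX poly_power mult_ac)
  also have "\<dots> = (ev s t Q * w ^ K * t ^ M') * s ^ (K + D)"
    by (simp add: power_mult_distrib power_add mult_ac)
  also have "\<dots> = (ev w t P * s ^ D) * s ^ (L + K) * t ^ M"
    unfolding e1 by (simp add: power_add mult_ac)
  also have "ev w t P * s ^ D = (\<Sum>j\<le>D. poly (coeff P j) t * poly W t ^ j * s ^ (D - j))"
  proof -
    have "ev w t P * s ^ D = (\<Sum>j\<le>D. poly (coeff P j) t * w ^ j * s ^ D)"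
      by (simp add: ev_bounded[of P D] D_def sum_distrib_right)
    also have "\<dots> = (\<Sum>j\<le>D. poly (coeff P j) t * poly W t ^ j * s ^ (D - j))"
    proof (intro sum.cong refl)
      fix j assume "j \<in> {..D}"
      then have "s ^ D = s ^ j * s ^ (D - j)" by (simp flip: power_add)
      then have "w ^ j * s ^ D = (w * s) ^ j * s ^ (D - j)" by (simp add: power_mult_distrib)
      then show "poly (coeff P j) t * w ^ j * s ^ D = poly (coeff P j) t * poly W t ^ j * s ^ (D - j)"
        unfolding ws by (simp add: mult.assoc)
    qed
    finally show ?thesis .
  qed
  also have "(\<Sum>j\<le>D. poly (coeff P j) t * poly W t ^ j * s ^ (D - j)) * s ^ (L + K) * t ^ M = ev s t QR"
    unfolding QR_def ev_sum sum_distrib_right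
  proof (intro sum.cong refl)
    fix j assume "j \<in> {..D}"
    then have "L + K + D - j = (D - j) + (L + K)" by simp
    then have "s ^ (L + K + D - j) = s ^ (D - j) * s ^ (L + K)" by (metis power_add)
    then show "poly (coeff P j) t * poly W t ^ j * s ^ (D - j) * s ^ (L + K) * t ^ M =
         ev s t (monom (X ^ M * coeff P j * W ^ j) (L + K + D - j))"
      by (simp add: pX poly_power mult_ac)
  qed
  finally have "ev s t (QL - QR) = 0" by simp
  moreover have "QL - QR \<in> RPP R0" unfolding QL_def QR_def
    by (intro RPP_diff RPP_smult RPP_mult RPP_sum RPP_monom RP_mult RP_power RP_1 XR rcR W(1) Q
        RPP_coeff P)
  ultimately have "QL - QR = 0" using ind unfolding indep_def by blast
  then have "coeff QL D = coeff QR D" by simp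
  moreover have "coeff QL D = W ^ K * X ^ M' * coeff Q 0"
    unfolding QL_def by (simp add: coeff_monom_mult)
  moreover have "coeff QR D = X ^ M * coeff P (L + K) * W ^ (L + K)"
  proof -
    have "coeff QR D = (\<Sum>j\<le>D. if j = L + K then X ^ M * coeff P j * W ^ j else 0)"
      unfolding QR_def coeff_sum coeff_monom by (intro sum.cong refl) auto
    also have "\<dots> = (if L + K \<le> D then X ^ M * coeff P (L + K) * W ^ (L + K) else 0)"
      by (simp add: sum.delta)
    also have "\<dots> = X ^ M * coeff P (L + K) * W ^ (L + K)"
      by (auto simp: D_def coeff_eq_0)
    finally show ?thesis .
  qed
  ultimately have "W ^ K * (X ^ M' * coeff Q 0) = W ^ K * (X ^ M * coeff P (L + K) * W ^ L)"
    by (simp add: power_add mult_ac)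
  then have e2: "X ^ M' * coeff Q 0 = X ^ M * coeff P (L + K) * W ^ L"
    using W0 by simp
  have "poly (W ^ L) 0 \<noteq> 0" using W(2) by (simp only: poly_0_coeff_0 coeff_0_power) simp
  then obtain g where g: "coeff Q 0 = W ^ L * g" using Xdiv[OF e2[unfolded X_def]] by blast
  have "g \<in> RP R0"
    by (rule QL[OF rcR RP_power[OF rcR W(1)] _ RPP_coeff[OF Q] g]) (simp add: coeff_0_power W(2))
  then show ?thesis using g by blast
qed

lemma pow_inv_split:
  fixes z :: "'a::field"
  assumes "z \<noteq> 0" "k \<le> l"
  shows "z ^ l * inverse z ^ k = z ^ (l - k)"
proof -
  have "z ^ l = z ^ (l - k) * z ^ k" using assms(2) by (simp flip: power_add)
  then show ?thesis using assms(1) by (simp add: field_simps)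
qed

lemma Ppol_refl:
  fixes z :: "'a::field"
  assumes "z \<noteq> 0" "p l \<noteq> 0"
  shows "z ^ l * Ppol l p (inverse z) = p l * Pbar l p z"
proof -
  have "z ^ l * Ppol l p (inverse z) = z ^ l + (\<Sum>k=1..l. p k * (z ^ l * inverse z ^ k))"
    unfolding Ppol_def by (simp add: algebra_simps sum_distrib_left power_inverse)
  also have "\<dots> = z ^ l + (\<Sum>k=1..l. p k * z ^ (l - k))"
    by (intro arg_cong2[where f="(+)"] refl sum.cong) (auto simp: pow_inv_split assms(1))
  also have "\<dots> = p l * Pbar l p z" unfolding Pbar_def
    by (simp only: times_divide_eq_right nonzero_mult_div_cancel_left[OF assms(2)])
  finally show ?thesis .
qed

lemma Pbar_refl:
  fixes z :: "'a::field"
  assumes "z \<noteq> 0" "p l \<noteq> 0"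
  shows "z ^ l * Pbar l p (inverse z) = inverse (p l) * Ppol l p z"
proof -
  have "z ^ l * Pbar l p (inverse z) = (z ^ l * inverse z ^ l + (\<Sum>k=1..l. p k * (z ^ l * inverse z ^ (l - k)))) / p l"
    unfolding Pbar_def by (simp add: algebra_simps sum_distrib_left power_inverse)
  also have "\<dots> = (1 + (\<Sum>k=1..l. p k * z ^ k)) / p l"
    by (intro arg_cong2[where f="(/)"] arg_cong2[where f="(+)"] refl sum.cong)
      (auto simp: pow_inv_split[OF assms(1)])
  also have "\<dots> = inverse (p l) * Ppol l p z" unfolding Ppol_def by (simp add: field_simps)
  finally show ?thesis .
qed

definition PPp :: "nat \<Rightarrow> (nat \<Rightarrow> 'a::field) \<Rightarrow> 'a poly" where
  "PPp l p = 1 + (\<Sum>k\<in>{1..l}. monom (p k) k)"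

definition PBp :: "nat \<Rightarrow> (nat \<Rightarrow> 'a::field) \<Rightarrow> 'a poly" where
  "PBp l p = smult (inverse (p l)) (monom 1 l + (\<Sum>k\<in>{1..l}. monom (p k) (l - k)))"

lemma poly_PPp: "poly (PPp l p) z = Ppol l p z"
  by (simp add: PPp_def Ppol_def poly_sum poly_monom)

lemma poly_PBp: "poly (PBp l p) z = Pbar l p z"
  by (simp add: PBp_def Pbar_def poly_sum poly_monom field_simps)

lemma coeff0_PPp: "coeff (PPp l p) 0 = 1"
  by (simp add: PPp_def coeff_sum)

lemma coeff0_PBp:
  assumes "l \<ge> 1" "p l \<noteq> 0"
  shows "coeff (PBp l p) 0 = 1"
proof -
  have "(\<Sum>k\<in>{1..l}. coeff (monom (p k) (l - k)) 0) = (\<Sum>k\<in>{1..l}. if k = l then p k else 0)"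
    by (intro sum.cong refl) auto
  also have "\<dots> = p l" using assms(1) by simp
  finally show ?thesis using assms by (simp add: PBp_def coeff_sum)
qed

lemma RP_PPp: "rc R0 \<Longrightarrow> (\<And>k. 1 \<le> k \<Longrightarrow> k \<le> l \<Longrightarrow> p k \<in> R0) \<Longrightarrow> PPp l p \<in> RP R0"
  unfolding PPp_def by (intro RP_add RP_1 RP_sum RP_monom) auto

lemma RP_PBp: "rc R0 \<Longrightarrow> (\<And>k. 1 \<le> k \<Longrightarrow> k \<le> l \<Longrightarrow> p k \<in> R0) \<Longrightarrow> inverse (p l) \<in> R0 \<Longrightarrow> PBp l p \<in> RP R0"
  unfolding PBp_def by (intro RP_smult RP_add RP_monom RP_sum rc_one) auto

lemma mono_eval_single:
  "mono_eval v (\<lambda>j. if j = i then 1 else 0) = v i"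
proof -
  have "{j. (if j = i then 1 else 0) \<noteq> (0::nat)} = {i}" by auto
  then show ?thesis unfolding mono_eval_def by simp
qed

lemma alg_indep_D:
  assumes "alg_indep_Q I v" "finite S" "\<forall>e\<in>S. finite {i. e i \<noteq> 0} \<and> {i. e i \<noteq> 0} \<subseteq> I"
    "(\<Sum>e\<in>S. of_rat (c e) * mono_eval v e) = 0" "e \<in> S"
  shows "c e = 0"
  using assms unfolding alg_indep_Q_def by blast

lemma alg_indep_nz:
  assumes "alg_indep_Q I v" "i \<in> I"
  shows "v i \<noteq> 0"
proof
  assume vi: "v i = 0"
  let ?e = "\<lambda>j. if j = i then 1 else (0::nat)"
  have "{j. ?e j \<noteq> 0} = {i}" by auto
  then have "\<forall>e\<in>{?e}. finite {j. e j \<noteq> 0} \<and> {j. e j \<noteq> 0} \<subseteq> I" using assms(2) by auto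
  moreover have "(\<Sum>e\<in>{?e}. of_rat ((\<lambda>_. 1) e) * mono_eval v e) = 0"
    using vi by (simp add: mono_eval_single)
  ultimately have "(\<lambda>_. 1::rat) ?e = 0"
    by (intro alg_indep_D[OF assms(1), where S="{?e}" and c="\<lambda>_. 1"]) auto
  then show False by simp
qed

locale CA =
  fixes l1 l2 :: nat and p1 p2 :: "nat \<Rightarrow> 'a::field_char_0" and y1 y2 :: 'a
  assumes l1: "l1 \<ge> 1" and l2: "l2 \<ge> 1" and ai: "alg_indep_Q (cvars l1 l2) (cval p1 p2 y1 y2)"
begin

abbreviation "R \<equiv> zp_alg l1 l2 p1 p2 {}"
abbreviation "x \<equiv> xseq l1 l2 p1 p2 y1 y2"
abbreviation "E \<equiv> exch l1 l2 p1 p2"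

lemma rcR: "rc R" by (rule zp_alg_rc)

lemma p1_nz: "1 \<le> k \<Longrightarrow> k \<le> l1 \<Longrightarrow> p1 k \<noteq> 0"
  using alg_indep_nz[OF ai, of "PV1 k"] by (auto simp: cvars_def)
lemma p2_nz: "1 \<le> k \<Longrightarrow> k \<le> l2 \<Longrightarrow> p2 k \<noteq> 0"
  using alg_indep_nz[OF ai, of "PV2 k"] by (auto simp: cvars_def)

definition Ep :: "int \<Rightarrow> 'a poly" where
  "Ep k = (if k mod 4 = 1 then PPp l1 p1 else if k mod 4 = 2 then PPp l2 p2
           else if k mod 4 = 3 then PBp l1 p1 else PBp l2 p2)"

lemma poly_Ep: "poly (Ep k) z = E k z"
  by (simp add: Ep_def exch_def poly_PPp poly_PBp)

lemma Ep_RP: "Ep k \<in> RP R"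
proof -
  have "PPp l1 p1 \<in> RP R" by (rule RP_PPp[OF rcR]) (auto intro: zp_alg.par1)
  moreover have "PPp l2 p2 \<in> RP R" by (rule RP_PPp[OF rcR]) (auto intro: zp_alg.par2)
  moreover have "PBp l1 p1 \<in> RP R" by (rule RP_PBp[OF rcR]) (use l1 in \<open>auto intro: zp_alg.par1 zp_alg.par1i\<close>)
  moreover have "PBp l2 p2 \<in> RP R" by (rule RP_PBp[OF rcR]) (use l2 in \<open>auto intro: zp_alg.par2 zp_alg.par2i\<close>)
  ultimately show ?thesis unfolding Ep_def by auto
qed

lemma Ep_coeff0: "coeff (Ep k) 0 = 1"
  unfolding Ep_def using l1 l2 p1_nz[of l1] p2_nz[of l2]
  by (auto simp: coeff0_PPp coeff0_PBp)

lemma Ep_nz: "Ep k \<noteq> 0"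
  using Ep_coeff0[of k] by auto

lemma E_per: "E (k + 4) = E k"
  by (rule ext) (simp add: exch_def)

definition Lv :: "int \<Rightarrow> nat" where
  "Lv k = (if k mod 4 = 1 \<or> k mod 4 = 3 then l1 else l2)"

definition Uv :: "int \<Rightarrow> 'a" where
  "Uv k = (if k mod 4 = 1 then p1 l1 else if k mod 4 = 2 then p2 l2
           else if k mod 4 = 3 then inverse (p1 l1) else inverse (p2 l2))"

lemma Uv_R: "Uv k \<in> R"
  unfolding Uv_def using l1 l2 by (auto intro: zp_alg.intros)

lemma E_refl: "z \<noteq> 0 \<Longrightarrow> z ^ Lv k * E k (inverse z) = Uv k * E (k + 2) z"
proof -
  assume z: "z \<noteq> 0"
  have n1: "p1 l1 \<noteq> 0" using p1_nz[of l1] l1 by auto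
  have n2: "p2 l2 \<noteq> 0" using p2_nz[of l2] l2 by auto
  have "k mod 4 = 0 \<or> k mod 4 = 1 \<or> k mod 4 = 2 \<or> k mod 4 = 3" by auto
  moreover have "(k + 2) mod 4 = (k mod 4 + 2) mod 4" by (simp add: mod_add_left_eq)
  ultimately show ?thesis
    using Ppol_refl[of z p1 l1, OF z n1] Ppol_refl[of z p2 l2, OF z n2]
      Pbar_refl[of z p1 l1, OF z n1] Pbar_refl[of z p2 l2, OF z n2]
    by (auto simp: exch_def Lv_def Uv_def)
qed

end

context CA
begin

abbreviation "v \<equiv> cval p1 p2 y1 y2"
definition "PVs = PV1 ` {1..l1} \<union> PV2 ` {1..l2}"

lemma cvars_eq: "cvars l1 l2 = PVs \<union> {XV1, XV2}"
  by (auto simp: cvars_def PVs_def)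

lemma finite_PVs: "finite PVs" by (simp add: PVs_def)
lemma XV_notin: "XV1 \<notin> PVs" "XV2 \<notin> PVs" by (auto simp: PVs_def)

lemma mono_eval_prod:
  assumes "finite T" "{i. e i \<noteq> 0} \<subseteq> T"
  shows "mono_eval w e = (\<Prod>i\<in>T. w i ^ e i)"
  unfolding mono_eval_def
  by (rule prod.mono_neutral_left) (use assms in auto)

lemma mono_eval_add:
  assumes "{i. e i \<noteq> 0} \<subseteq> PVs" "{i. f i \<noteq> 0} \<subseteq> PVs"
  shows "mono_eval w (\<lambda>i. e i + f i) = mono_eval w e * mono_eval w f"
proof -
  have "{i. e i + f i \<noteq> 0} \<subseteq> PVs" using assms by auto
  then show ?thesis
    using assms by (simp add: mono_eval_prod[OF finite_PVs] power_add prod.distrib)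
qed

definition "Pol = {s. \<exists>S c. finite S \<and> (\<forall>e\<in>S. {i. e i \<noteq> 0} \<subseteq> PVs) \<and>
                     s = (\<Sum>e\<in>S. of_rat (c e) * mono_eval v e)}"

lemma Pol_collect:
  assumes "finite A" "\<And>a. a \<in> A \<Longrightarrow> {i. Ef a i \<noteq> 0} \<subseteq> PVs"
  shows "(\<Sum>a\<in>A. of_rat (c a) * mono_eval v (Ef a)) \<in> Pol"
proof -
  define c' where "c' g = (\<Sum>a\<in>{a\<in>A. Ef a = g}. c a)" for g
  have "(\<Sum>a\<in>A. of_rat (c a) * mono_eval v (Ef a)) =
        (\<Sum>g\<in>Ef ` A. \<Sum>a\<in>{a\<in>A. Ef a = g}. of_rat (c a) * mono_eval v (Ef a))"
    by (rule sum.image_gen[OF assms(1)])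
  also have "\<dots> = (\<Sum>g\<in>Ef ` A. of_rat (c' g) * mono_eval v g)"
    by (intro sum.cong refl) (simp add: c'_def of_rat_sum sum_distrib_right)
  finally show ?thesis unfolding Pol_def using assms by blast
qed

lemma Pol_add: "s1 \<in> Pol \<Longrightarrow> s2 \<in> Pol \<Longrightarrow> s1 + s2 \<in> Pol"
proof -
  assume "s1 \<in> Pol" "s2 \<in> Pol"
  then obtain S1 c1 S2 c2 where h: "finite S1" "\<forall>e\<in>S1. {i. e i \<noteq> 0} \<subseteq> PVs"
     "s1 = (\<Sum>e\<in>S1. of_rat (c1 e) * mono_eval v e)"
     "finite S2" "\<forall>e\<in>S2. {i. e i \<noteq> 0} \<subseteq> PVs"
     "s2 = (\<Sum>e\<in>S2. of_rat (c2 e) * mono_eval v e)" unfolding Pol_def by blast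
  define c where "c a = (case a of Inl e \<Rightarrow> c1 e | Inr e \<Rightarrow> c2 e)" for a
  define Ef where "Ef a = (case a of Inl e \<Rightarrow> e | Inr e \<Rightarrow> e)" for a :: "(cvar \<Rightarrow> nat) + (cvar \<Rightarrow> nat)"
  have "s1 + s2 = (\<Sum>a\<in>S1 <+> S2. of_rat (c a) * mono_eval v (Ef a))"
    using h by (simp add: sum.Plus c_def Ef_def o_def)
  also have "\<dots> \<in> Pol" using h by (intro Pol_collect) (auto simp: Ef_def)
  finally show ?thesis .
qed

lemma Pol_mult: "s1 \<in> Pol \<Longrightarrow> s2 \<in> Pol \<Longrightarrow> s1 * s2 \<in> Pol"
proof -
  assume "s1 \<in> Pol" "s2 \<in> Pol"
  then obtain S1 c1 S2 c2 where h: "finite S1" "\<forall>e\<in>S1. {i. e i \<noteq> 0} \<subseteq> PVs"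
     "s1 = (\<Sum>e\<in>S1. of_rat (c1 e) * mono_eval v e)"
     "finite S2" "\<forall>e\<in>S2. {i. e i \<noteq> 0} \<subseteq> PVs"
     "s2 = (\<Sum>e\<in>S2. of_rat (c2 e) * mono_eval v e)" unfolding Pol_def by blast
  have "s1 * s2 = (\<Sum>e\<in>S1. \<Sum>f\<in>S2. of_rat (c1 e) * mono_eval v e * (of_rat (c2 f) * mono_eval v f))"
    using h by (simp add: sum_product)
  also have "\<dots> = (\<Sum>a\<in>S1 \<times> S2. of_rat (c1 (fst a) * c2 (snd a)) * mono_eval v (\<lambda>i. fst a i + snd a i))"
    unfolding sum.cartesian_product
  proof (rule sum.cong[OF refl])
    fix a assume "a \<in> S1 \<times> S2"
    then have "mono_eval v (\<lambda>i. fst a i + snd a i) = mono_eval v (fst a) * mono_eval v (snd a)"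
      using h(2,5) by (intro mono_eval_add) auto
    then show "(case a of (e, f) \<Rightarrow> of_rat (c1 e) * mono_eval v e * (of_rat (c2 f) * mono_eval v f)) =
       of_rat (c1 (fst a) * c2 (snd a)) * mono_eval v (\<lambda>i. fst a i + snd a i)"
      by (simp add: split_beta of_rat_mult mult_ac)
  qed
  also have "\<dots> \<in> Pol" using h by (intro Pol_collect) auto
  finally show ?thesis .
qed

lemma Pol_neg: "s \<in> Pol \<Longrightarrow> - s \<in> Pol"
proof -
  assume "s \<in> Pol"
  then obtain S c where h: "finite S" "\<forall>e\<in>S. {i. e i \<noteq> 0} \<subseteq> PVs"
     "s = (\<Sum>e\<in>S. of_rat (c e) * mono_eval v e)" unfolding Pol_def by blast
  have "- s = (\<Sum>e\<in>S. of_rat (- c e) * mono_eval v e)"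
    using h by (simp add: sum_negf of_rat_minus)
  then show ?thesis unfolding Pol_def
    by (intro CollectI exI[of _ S] exI[of _ "\<lambda>e. - c e"]) (use h in auto)
qed

lemma Pol_var: "i \<in> PVs \<Longrightarrow> v i \<in> Pol"
proof -
  assume i: "i \<in> PVs"
  let ?e = "\<lambda>j. if j = i then 1 else (0::nat)"
  have "v i = (\<Sum>e\<in>{?e}. of_rat ((\<lambda>_. 1) e) * mono_eval v e)"
    by (simp add: mono_eval_single)
  moreover have "{j. ?e j \<noteq> 0} \<subseteq> PVs" using i by auto
  ultimately show ?thesis unfolding Pol_def
    by (intro CollectI exI[of _ "{?e}"] exI[of _ "\<lambda>_. 1"]) auto
qed

lemma Pol_one: "1 \<in> Pol"
proof -
  have "(1::'a) = (\<Sum>e\<in>{\<lambda>_. 0}. of_rat ((\<lambda>_. 1) e) * mono_eval v e)"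
    by (simp add: mono_eval_def)
  then show ?thesis unfolding Pol_def
    by (intro CollectI exI[of _ "{\<lambda>_. 0}"] exI[of _ "\<lambda>_. 1"]) auto
qed

lemma Pol_prod: "finite A \<Longrightarrow> A \<subseteq> PVs \<Longrightarrow> (\<Prod>i\<in>A. v i) \<in> Pol"
  by (induction A rule: finite_induct) (auto intro: Pol_one Pol_mult Pol_var)

lemma Pol_power: "s \<in> Pol \<Longrightarrow> s ^ n \<in> Pol"
  by (induction n) (auto intro: Pol_one Pol_mult)

definition "pii = (\<Prod>i\<in>PVs. v i)"

lemma v_nz: "i \<in> PVs \<Longrightarrow> v i \<noteq> 0"
  using alg_indep_nz[OF ai] cvars_eq by auto

lemma pii_Pol: "pii \<in> Pol" unfolding pii_def by (rule Pol_prod[OF finite_PVs order.refl])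
lemma pii_nz: "pii \<noteq> 0" unfolding pii_def using v_nz finite_PVs by simp

lemma inv_pii: "i \<in> PVs \<Longrightarrow> inverse (v i) * pii \<in> Pol"
proof -
  assume i: "i \<in> PVs"
  have "pii = v i * (\<Prod>j\<in>PVs - {i}. v j)" unfolding pii_def
    using i finite_PVs by (simp add: prod.remove)
  then have "inverse (v i) * pii = (\<Prod>j\<in>PVs - {i}. v j)" using v_nz[OF i] by simp
  then show ?thesis using Pol_prod[of "PVs - {i}"] finite_PVs by auto
qed

lemma Pol_shift: "s * pii ^ D \<in> Pol \<Longrightarrow> D \<le> D' \<Longrightarrow> s * pii ^ D' \<in> Pol"
proof -
  assume A: "s * pii ^ D \<in> Pol" and "D \<le> D'"
  have "s * pii ^ D * pii ^ (D' - D) \<in> Pol" by (rule Pol_mult[OF A Pol_power[OF pii_Pol]])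
  moreover have "s * pii ^ D * pii ^ (D' - D) = s * pii ^ D'"
    using \<open>D \<le> D'\<close> by (simp add: mult.assoc flip: power_add)
  ultimately show ?thesis by simp
qed

lemma R_rep: "r \<in> R \<Longrightarrow> \<exists>D. r * pii ^ D \<in> Pol"
proof (induction rule: zp_alg.induct)
  case (gen g) then show ?case by simp
next
  case one then show ?case by (intro exI[of _ 0]) (simp add: Pol_one)
next
  case (par1 k) then show ?case
    by (intro exI[of _ 0]) (use Pol_var[of "PV1 k"] in \<open>auto simp: PVs_def\<close>)
next
  case (par2 k) then show ?case
    by (intro exI[of _ 0]) (use Pol_var[of "PV2 k"] in \<open>auto simp: PVs_def\<close>)
next
  case (par1i k) then show ?case
    by (intro exI[of _ 1]) (use inv_pii[of "PV1 k"] in \<open>auto simp: PVs_def\<close>)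
next
  case (par2i k) then show ?case
    by (intro exI[of _ 1]) (use inv_pii[of "PV2 k"] in \<open>auto simp: PVs_def\<close>)
next
  case (neg a)
  then obtain D where "a * pii ^ D \<in> Pol" by blast
  then show ?case by (intro exI[of _ D]) (metis Pol_neg mult_minus_left)
next
  case (add a b)
  then obtain D1 D2 where "a * pii ^ D1 \<in> Pol" "b * pii ^ D2 \<in> Pol" by blast
  then have "a * pii ^ (D1 + D2) \<in> Pol" "b * pii ^ (D1 + D2) \<in> Pol"
    by (auto intro: Pol_shift)
  then show ?case by (intro exI[of _ "D1 + D2"]) (metis Pol_add distrib_right)
next
  case (mult a b)
  then obtain D1 D2 where "a * pii ^ D1 \<in> Pol" "b * pii ^ D2 \<in> Pol" by blast
  then have "(a * pii ^ D1) * (b * pii ^ D2) \<in> Pol" by (rule Pol_mult)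
  then show ?case by (intro exI[of _ "D1 + D2"]) (simp add: power_add mult_ac)
qed

lemma mono_eval_upd:
  assumes "{i. e i \<noteq> 0} \<subseteq> PVs"
  shows "mono_eval v (e(XV1 := a, XV2 := b)) = mono_eval v e * y1 ^ a * y2 ^ b"
proof -
  have fin: "finite (cvars l1 l2)" by (simp add: cvars_def)
  have s1: "{i. (e(XV1 := a, XV2 := b)) i \<noteq> 0} \<subseteq> cvars l1 l2" using assms cvars_eq by auto
  have "mono_eval v (e(XV1 := a, XV2 := b)) = (\<Prod>i\<in>PVs \<union> {XV1, XV2}. v i ^ (e(XV1 := a, XV2 := b)) i)"
    by (subst mono_eval_prod[OF fin s1]) (simp only: cvars_eq)
  also have "\<dots> = (\<Prod>i\<in>PVs. v i ^ (e(XV1 := a, XV2 := b)) i) * (\<Prod>i\<in>{XV1, XV2}. v i ^ (e(XV1 := a, XV2 := b)) i)"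
    by (rule prod.union_disjoint) (use finite_PVs XV_notin in auto)
  also have "(\<Prod>i\<in>PVs. v i ^ (e(XV1 := a, XV2 := b)) i) = (\<Prod>i\<in>PVs. v i ^ e i)"
    by (intro prod.cong refl) (use XV_notin in auto)
  also have "\<dots> = mono_eval v e" by (rule mono_eval_prod[OF finite_PVs assms, symmetric])
  also have "(\<Prod>i\<in>{XV1, XV2}. v i ^ (e(XV1 := a, XV2 := b)) i) = y1 ^ a * y2 ^ b" by simp
  finally show ?thesis by (simp only: mult.assoc)
qed

lemma Pol_indep:
  assumes "\<And>i j. s i j \<in> Pol"
    and "(\<Sum>i\<le>A. \<Sum>j\<le>B. s i j * y1 ^ i * y2 ^ j) = 0"
  shows "\<forall>i\<le>A. \<forall>j\<le>B. s i j = 0"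
proof -
  have "\<forall>ij. \<exists>Sc. finite (fst Sc) \<and> (\<forall>e\<in>fst Sc. {i. e i \<noteq> 0} \<subseteq> PVs) \<and>
        s (fst ij) (snd ij) = (\<Sum>e\<in>fst Sc. of_rat (snd Sc e) * mono_eval v e)"
  proof
    fix ij
    obtain S c where "finite S" "\<forall>e\<in>S. {i. e i \<noteq> 0} \<subseteq> PVs"
      "s (fst ij) (snd ij) = (\<Sum>e\<in>S. of_rat (c e) * mono_eval v e)"
      using assms(1)[of "fst ij" "snd ij"] unfolding Pol_def by blast
    then show "\<exists>Sc. finite (fst Sc) \<and> (\<forall>e\<in>fst Sc. {i. e i \<noteq> 0} \<subseteq> PVs) \<and>
        s (fst ij) (snd ij) = (\<Sum>e\<in>fst Sc. of_rat (snd Sc e) * mono_eval v e)"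
      by (intro exI[of _ "(S, c)"]) simp
  qed
  from choice[OF this] obtain Sc where Sc0: "\<forall>ij. finite (fst (Sc ij)) \<and> (\<forall>e\<in>fst (Sc ij). {i. e i \<noteq> 0} \<subseteq> PVs) \<and>
        s (fst ij) (snd ij) = (\<Sum>e\<in>fst (Sc ij). of_rat (snd (Sc ij) e) * mono_eval v e)"
    by blast
  have Sc: "\<And>ij. finite (fst (Sc ij))" "\<And>ij. \<forall>e\<in>fst (Sc ij). {i. e i \<noteq> 0} \<subseteq> PVs"
     "\<And>ij. s (fst ij) (snd ij) = (\<Sum>e\<in>fst (Sc ij). of_rat (snd (Sc ij) e) * mono_eval v e)"
    using Sc0 by blast+
  define S where "S ij = fst (Sc ij)" for ij
  define c where "c ij = snd (Sc ij)" for ij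
  have S: "finite (S ij)" "\<And>e. e \<in> S ij \<Longrightarrow> {i. e i \<noteq> 0} \<subseteq> PVs"
    "s (fst ij) (snd ij) = (\<Sum>e\<in>S ij. of_rat (c ij e) * mono_eval v e)" for ij
    using Sc unfolding S_def c_def by auto
  define Dom where "Dom = Sigma ({..A} \<times> {..B}) S"
  define Ef where "Ef a = (snd a)(XV1 := fst (fst a), XV2 := snd (fst a))" for a :: "(nat \<times> nat) \<times> (cvar \<Rightarrow> nat)"
  define cc where "cc a = c (fst a) (snd a)" for a :: "(nat \<times> nat) \<times> (cvar \<Rightarrow> nat)"
  have finDom: "finite Dom" unfolding Dom_def using S(1) by auto
  have inj: "inj_on Ef Dom"
  proof (rule inj_onI)
    fix a b assume ab: "a \<in> Dom" "b \<in> Dom" "Ef a = Ef b"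
    obtain i j e where a: "a = ((i, j), e)" by (metis prod.collapse)
    obtain i' j' e' where b: "b = ((i', j'), e')" by (metis prod.collapse)
    have e: "{k. e k \<noteq> 0} \<subseteq> PVs" "{k. e' k \<noteq> 0} \<subseteq> PVs"
      using ab(1,2) S(2) unfolding a b Dom_def by auto
    have "e XV1 = 0" "e XV2 = 0" "e' XV1 = 0" "e' XV2 = 0" using e XV_notin by auto
    have eq: "e(XV1 := i, XV2 := j) = e'(XV1 := i', XV2 := j')" using ab(3) unfolding a b Ef_def by simp
    then have "i = i'" "j = j'" by (metis fun_upd_other fun_upd_same cvar.distinct(11))+
    moreover have "e = e'"
    proof
      fix k show "e k = e' k"
      proof (cases "k = XV1 \<or> k = XV2")
        case True then show ?thesis using \<open>e XV1 = 0\<close> \<open>e XV2 = 0\<close> \<open>e' XV1 = 0\<close> \<open>e' XV2 = 0\<close> by auto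
      next
        case False then show ?thesis using fun_cong[OF eq, of k] by simp
      qed
    qed
    ultimately show "a = b" unfolding a b by simp
  qed
  have "(\<Sum>i\<le>A. \<Sum>j\<le>B. s i j * y1 ^ i * y2 ^ j) =
        (\<Sum>ij\<in>{..A} \<times> {..B}. s (fst ij) (snd ij) * y1 ^ fst ij * y2 ^ snd ij)"
    by (simp add: sum.cartesian_product split_beta)
  also have "\<dots> = (\<Sum>ij\<in>{..A} \<times> {..B}. \<Sum>e\<in>S ij. of_rat (c ij e) * mono_eval v (e(XV1 := fst ij, XV2 := snd ij)))"
  proof (intro sum.cong refl)
    fix ij assume ij: "ij \<in> {..A} \<times> {..B}"
    have "(\<Sum>e\<in>S ij. of_rat (c ij e) * mono_eval v (e(XV1 := fst ij, XV2 := snd ij))) =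
          (\<Sum>e\<in>S ij. of_rat (c ij e) * mono_eval v e * y1 ^ fst ij * y2 ^ snd ij)"
      by (intro sum.cong refl) (simp add: mono_eval_upd[OF S(2)] mult.assoc)
    then show "s (fst ij) (snd ij) * y1 ^ fst ij * y2 ^ snd ij =
          (\<Sum>e\<in>S ij. of_rat (c ij e) * mono_eval v (e(XV1 := fst ij, XV2 := snd ij)))"
      by (simp add: S(3) sum_distrib_right)
  qed
  also have "\<dots> = (\<Sum>a\<in>Dom. of_rat (cc a) * mono_eval v (Ef a))"
    unfolding Dom_def by (subst sum.Sigma) (auto simp: S(1) cc_def Ef_def split_beta)
  also have "\<dots> = (\<Sum>g\<in>Ef ` Dom. of_rat (cc (inv_into Dom Ef g)) * mono_eval v g)"
    by (subst sum.reindex[OF inj]) (simp add: inv_into_f_f[OF inj])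
  finally have z: "(\<Sum>g\<in>Ef ` Dom. of_rat (cc (inv_into Dom Ef g)) * mono_eval v g) = 0"
    using assms(2) by simp
  have supp: "finite {i. g i \<noteq> 0} \<and> {i. g i \<noteq> 0} \<subseteq> cvars l1 l2" if gD: "g \<in> Ef ` Dom" for g
  proof -
    obtain a where a: "a \<in> Dom" "g = Ef a" using gD by blast
    have "snd a \<in> S (fst a)" using a(1) unfolding Dom_def by (auto simp: mem_Sigma_iff split_beta)
    then have "{i. snd a i \<noteq> 0} \<subseteq> PVs" by (rule S(2))
    then have "{i. g i \<noteq> 0} \<subseteq> cvars l1 l2" unfolding a(2) Ef_def cvars_eq by auto
    moreover have "finite (cvars l1 l2)" by (simp add: cvars_def)
    ultimately show ?thesis using finite_subset by blast
  qed
  have "\<forall>g\<in>Ef ` Dom. cc (inv_into Dom Ef g) = 0"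
    using alg_indep_D[OF ai finite_imageI[OF finDom] _ z] supp by blast
  then have cc0: "\<And>a. a \<in> Dom \<Longrightarrow> cc a = 0" by (metis inv_into_f_f[OF inj] imageI)
  show ?thesis
  proof (intro allI impI)
    fix i j assume ij: "i \<le> A" "j \<le> B"
    have "s i j = (\<Sum>e\<in>S (i, j). of_rat (c (i, j) e) * mono_eval v e)" using S(3)[of "(i, j)"] by simp
    also have "\<dots> = 0"
      by (intro sum.neutral ballI) (use cc0 ij in \<open>auto simp: cc_def Dom_def\<close>)
    finally show "s i j = 0" .
  qed
qed

end

context CA
begin

lemma Pol_zero: "0 \<in> Pol"
  unfolding Pol_def by (intro CollectI exI[of _ "{}"]) auto

lemma base_indep: "indep R y1 y2"
  unfolding indep_def
proof (intro ballI impI)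
  fix Q assume Q: "Q \<in> RPP R" "ev y1 y2 Q = 0"
  define A where "A = degree Q"
  define B where "B = swapN Q"
  define c where "c i j = coeff (coeff Q i) j" for i j
  have cR: "c i j \<in> R" for i j unfolding c_def by (intro RP_coeff RPP_coeff Q(1))
  have "\<forall>ij. \<exists>D. c (fst ij) (snd ij) * pii ^ D \<in> Pol" using R_rep cR by blast
  from choice[OF this] obtain Df where "\<forall>ij. c (fst ij) (snd ij) * pii ^ Df ij \<in> Pol" by blast
  then have Df: "\<And>ij. c (fst ij) (snd ij) * pii ^ Df ij \<in> Pol" by blast
  define D where "D = (\<Sum>ij\<in>{..A} \<times> {..B}. Df ij)"
  have DD: "Df (i, j) \<le> D" if "i \<le> A" "j \<le> B" for i j
    unfolding D_def by (rule member_le_sum) (use that in auto)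
  define s where "s i j = c i j * pii ^ D" for i j
  have sP: "s i j \<in> Pol" if "i \<le> A" "j \<le> B" for i j
    unfolding s_def using Pol_shift[OF Df[of "(i, j)"] DD[OF that]] by simp
  define s' where "s' i j = (if i \<le> A \<and> j \<le> B then s i j else 0)" for i j
  have s'P: "s' i j \<in> Pol" for i j unfolding s'_def using sP Pol_zero by auto
  have "ev y1 y2 Q = (\<Sum>i\<le>A. poly (coeff Q i) y2 * y1 ^ i)" unfolding A_def by (rule ev_bounded) simp
  also have "\<dots> = (\<Sum>i\<le>A. \<Sum>j\<le>B. c i j * y1 ^ i * y2 ^ j)"
    unfolding B_def c_def by (intro sum.cong refl) (simp add: poly_bounded[OF swapN_ge] sum_distrib_right sum_distrib_left mult_ac)
  finally have "pii ^ D * (\<Sum>i\<le>A. \<Sum>j\<le>B. c i j * y1 ^ i * y2 ^ j) = 0" using Q(2) by simp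
  then have "(\<Sum>i\<le>A. \<Sum>j\<le>B. s' i j * y1 ^ i * y2 ^ j) = 0"
    by (simp add: s'_def s_def sum_distrib_left mult_ac)
  then have z: "\<forall>i\<le>A. \<forall>j\<le>B. s' i j = 0" by (rule Pol_indep[OF s'P])
  have "c i j = 0" for i j
  proof (cases "i \<le> A \<and> j \<le> B")
    case True
    then have "c i j * pii ^ D = 0" using z by (auto simp: s'_def s_def)
    then show ?thesis using pii_nz by simp
  next
    case False
    then have "\<not> i \<le> A \<or> \<not> j \<le> B" by auto
    then show ?thesis
    proof
      assume "\<not> i \<le> A" then show ?thesis by (simp add: c_def A_def coeff_eq_0)
    next
      assume "\<not> j \<le> B"
      then have "j > degree (coeff Q i)" using swapN_ge[of Q i] B_def by auto
      then show ?thesis by (simp add: c_def coeff_eq_0)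
    qed
  qed
  then show "Q = 0" unfolding c_def by (metis coeff_0 poly_eqI)
qed

lemma xfwd_fst: "fst (xfwd l1 l2 p1 p2 y1 y2 n) = x (int n + 1)"
  by (simp add: xseq_def)

lemma xfwd_Suc_fst: "fst (xfwd l1 l2 p1 p2 y1 y2 (Suc n)) = snd (xfwd l1 l2 p1 p2 y1 y2 n)"
  by (simp add: split_beta Let_def)

lemma xfwd_Suc_snd: "snd (xfwd l1 l2 p1 p2 y1 y2 (Suc n)) =
    E (int n + 2) (snd (xfwd l1 l2 p1 p2 y1 y2 n)) / fst (xfwd l1 l2 p1 p2 y1 y2 n)"
  by (simp add: split_beta Let_def)

lemma xfwd_snd: "snd (xfwd l1 l2 p1 p2 y1 y2 n) = x (int n + 2)"
  using xfwd_Suc_fst[of n] xfwd_fst[of "Suc n"] by (simp del: xfwd.simps add: ac_simps)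

lemma x_fwd: "k \<ge> 2 \<Longrightarrow> x (k + 1) = E k (x k) / x (k - 1)"
proof -
  assume k: "k \<ge> 2"
  define n where "n = nat (k - 2)"
  have kn: "k = int n + 2" using k n_def by simp
  have "x (k + 1) = snd (xfwd l1 l2 p1 p2 y1 y2 (Suc n))"
    using xfwd_snd[of "Suc n"] kn by simp
  also have "\<dots> = E k (x k) / x (k - 1)"
    by (simp only: xfwd_Suc_snd) (simp del: xfwd.simps add: xfwd_snd xfwd_fst kn algebra_simps)
  finally show ?thesis .
qed

lemma xbwd_Suc_fst: "fst (xbwd l1 l2 p1 p2 y1 y2 (Suc n)) =
    E (1 - int n) (fst (xbwd l1 l2 p1 p2 y1 y2 n)) / snd (xbwd l1 l2 p1 p2 y1 y2 n)"
  by (simp add: split_beta Let_def)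

lemma xbwd_Suc_snd: "snd (xbwd l1 l2 p1 p2 y1 y2 (Suc n)) = fst (xbwd l1 l2 p1 p2 y1 y2 n)"
  by (simp add: split_beta Let_def)

lemma x1: "x 1 = y1" by (simp add: xseq_def)
lemma x2: "x 2 = y2" by (simp add: xseq_def)

lemma xbwd_fst: "fst (xbwd l1 l2 p1 p2 y1 y2 n) = x (1 - int n)"
proof (cases n)
  case 0 then show ?thesis by (simp add: x1)
next
  case (Suc m)
  then have "\<not> (1 - int n \<ge> 1)" "nat (1 - (1 - int n)) = n" by auto
  then show ?thesis by (simp add: xseq_def del: xbwd.simps)
qed

lemma xbwd_snd: "snd (xbwd l1 l2 p1 p2 y1 y2 n) = x (2 - int n)"
proof (induction n)
  case 0 then show ?case by (simp add: x2)
next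
  case (Suc n) then show ?case by (simp only: xbwd_Suc_snd xbwd_fst) simp
qed

lemma x_bwd: "k \<le> 1 \<Longrightarrow> x (k - 1) = E k (x k) / x (k + 1)"
proof -
  assume k: "k \<le> 1"
  define n where "n = nat (1 - k)"
  have kn: "k = 1 - int n" using k n_def by simp
  have "x (k - 1) = fst (xbwd l1 l2 p1 p2 y1 y2 (Suc n))"
    using xbwd_fst[of "Suc n"] kn by simp
  also have "\<dots> = E k (x k) / x (k + 1)"
    by (simp only: xbwd_Suc_fst) (simp del: xbwd.simps add: xbwd_snd xbwd_fst kn algebra_simps)
  finally show ?thesis .
qed

lemma indep_all: "indep R (x m) (x (m + 1))"
proof (induction m rule: int_induct[where k=1])
  case base then show ?case using base_indep by (simp add: x1 x2)
next
  case (step1 i)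
  have d: "x (i + 2) = poly (Ep (i + 1)) (x (i + 1)) / x i"
    using x_fwd[of "i + 1"] step1(1) by (simp add: poly_Ep algebra_simps)
  have "indep R (x (i + 2)) (x (i + 1))"
    by (rule T1[OF rcR step1(2) Ep_RP Ep_nz d])
  then have "indep R (x (i + 1)) (x (i + 2))" by (rule indep_sym[OF rcR])
  then show ?case by (simp add: algebra_simps)
next
  case (step2 i)
  have c: "x (i - 1) = poly (Ep i) (x i) / x (i + 1)"
    using x_bwd[of i] step2(1) by (simp add: poly_Ep)
  have "indep R (x (i + 1)) (x i)" by (rule indep_sym[OF rcR step2(2)])
  then have "indep R (x (i - 1)) (x i)"
    by (rule T1[OF rcR _ Ep_RP Ep_nz c])
  then show ?case by simp
qed

lemma x_nz: "x k \<noteq> 0"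
  using indep_nz1[OF rcR indep_all[of k]] .

lemma x_rec: "x (k + 1) * x (k - 1) = E k (x k)"
proof (cases "k \<ge> 2")
  case True then show ?thesis using x_fwd[OF True] x_nz[of "k - 1"] by simp
next
  case False then show ?thesis using x_bwd[of k] x_nz[of "k + 1"] by simp
qed

lemma x_prev: "x (k - 1) = poly (Ep k) (x k) / x (k + 1)"
  using x_rec[of k] x_nz[of "k + 1"] by (simp add: poly_Ep field_simps)

lemma x_next: "x (k + 1) = poly (Ep k) (x k) / x (k - 1)"
  using x_rec[of k] x_nz[of "k - 1"] by (simp add: poly_Ep field_simps)

end

lemma ev_const_poly: "ev s t (map_poly (\<lambda>c. [:c:]) p) = poly p s"
proof -
  have "map_poly (\<lambda>q. poly q t) (map_poly (\<lambda>c. [:c:]) p) = map_poly (\<lambda>c. poly [:c:] t) p"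
    by (simp add: map_poly_map_poly o_def)
  then show ?thesis unfolding ev_def by simp
qed

lemma RPP_const_poly: "rc R0 \<Longrightarrow> p \<in> RP R0 \<Longrightarrow> map_poly (\<lambda>c. [:c:]) p \<in> RPP R0"
  unfolding RPP_def by (auto simp: coeff_map_poly intro!: RP_pCons RP_0 RP_coeff)

lemma Vadd:
  fixes a b :: "'a::field"
  assumes "a \<noteq> 0" "b \<noteq> 0"
  shows "ev a b Q1 / (a ^ L * b ^ M1) + ev a b Q2 / (a ^ L * b ^ M2) =
    ev a b (smult ([:0,1:] ^ M2) Q1 + smult ([:0,1:] ^ M1) Q2) / (a ^ L * b ^ (M1 + M2))"
  using assms by (simp add: field_simps power_add)

context CA
begin

abbreviation "T \<equiv> Tk l1 l2 p1 p2 y1 y2"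

lemma T_eq: "T k = zp_alg l1 l2 p1 p2 {x k, inverse (x k), x (k + 1), inverse (x (k + 1))}"
  by (simp add: Tk_def Let_def)

lemma T_rc: "rc (T k)" unfolding T_eq by (rule zp_alg_rc)
lemma T_R: "R \<subseteq> T k" unfolding T_eq by (rule zp_alg_R)
lemma T_gen: "x k \<in> T k" "inverse (x k) \<in> T k" "x (k + 1) \<in> T k" "inverse (x (k + 1)) \<in> T k"
  unfolding T_eq by (auto intro: zp_alg.gen)

lemma T_poly: "z \<in> T k \<Longrightarrow> q \<in> RP R \<Longrightarrow> poly q z \<in> T k"
  by (rule poly_mem[OF T_rc T_R])

lemma T_div: "u \<in> T k \<Longrightarrow> inverse w \<in> T k \<Longrightarrow> u / w \<in> T k"
  by (simp add: divide_inverse rc_mult[OF T_rc])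

lemma laurent3:
  assumes S: "rc S" "R \<subseteq> S" and de: "d \<in> S" "e \<in> S" "inverse d \<in> S" "inverse e \<in> S" "d \<noteq> 0" "e \<noteq> 0"
    and FGH: "F \<in> RP R" "G \<in> RP R" "H \<in> RP R" "coeff G 0 = 1" and u: "u \<in> R"
    and refl: "\<And>z. z \<noteq> 0 \<Longrightarrow> z ^ l * poly F (inverse z) = u * poly H z"
    and Hd: "poly H d \<noteq> 0"
  shows "poly F (poly G (poly H d / e) / d) / (poly H d / e) \<in> S"
proof -
  define b where "b = poly H d / e"
  have bS: "b \<in> S" unfolding b_def divide_inverse
    by (intro rc_mult[OF S(1)] poly_mem[OF S] FGH de)
  obtain w1 where w1: "w1 \<in> S" "poly G (0 + b) = poly G 0 + b * w1"
    using SH[OF S FGH(2) rc_zero[OF S(1)] bS] by blast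
  have Gb: "poly G b = 1 + b * w1" using w1(2) FGH(4) by (simp add: poly_0_coeff_0)
  define w2 where "w2 = inverse e * w1 * inverse d"
  have w2S: "w2 \<in> S" unfolding w2_def by (intro rc_mult[OF S(1)] de w1(1))
  define t where "t = poly H d * w2"
  have tS: "t \<in> S" unfolding t_def by (intro rc_mult[OF S(1)] poly_mem[OF S] FGH de w2S)
  have a1: "poly G b / d = inverse d + b * w1 * inverse d"
    unfolding Gb using de(5) by (simp add: field_simps)
  have a2: "b * w1 * inverse d = t"
    unfolding t_def w2_def b_def using de(5,6) by (simp add: field_simps)
  have a: "poly G b / d = inverse d + t" using a1 a2 by simp
  obtain w3 where w3: "w3 \<in> S" "poly F (inverse d + t) = poly F (inverse d) + t * w3"
    using SH[OF S FGH(1) de(3) tS] by blast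
  have Fd: "poly F (inverse d) = u * poly H d * inverse d ^ l"
    using refl[OF de(5)] de(5) by (simp add: field_simps)
  have Fa: "poly F (poly G b / d) = poly H d * (u * inverse d ^ l + w2 * w3)"
    by (simp only: a w3(2) Fd) (simp add: t_def algebra_simps)
  have "poly F (poly G b / d) / b = e * (u * inverse d ^ l + w2 * w3)"
    using Hd de(6) by (simp only: Fa) (simp add: b_def field_simps)
  moreover have "e * (u * inverse d ^ l + w2 * w3) \<in> S"
    using u S by (intro rc_mult[OF S(1)] rc_add[OF S(1)] rc_power[OF S(1)] de w2S w3(1)) auto
  ultimately show ?thesis unfolding b_def by simp
qed

lemma m_prev: "x (k - 1) \<in> T k"
  unfolding x_prev[of k] by (intro T_div T_poly T_gen Ep_RP)

lemma e_next2: "x (k + 2) = poly (Ep (k + 1)) (x (k + 1)) / x k"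
proof -
  have i: "k + 1 + 1 = k + 2" "k + 1 - 1 = k" by simp_all
  show ?thesis using x_next[of "k + 1"] unfolding i .
qed

lemma e_next3: "x (k + 3) = poly (Ep (k + 2)) (x (k + 2)) / x (k + 1)"
proof -
  have i: "k + 2 + 1 = k + 3" "k + 2 - 1 = k + 1" by simp_all
  show ?thesis using x_next[of "k + 2"] unfolding i .
qed

lemma e_next4: "x (k + 4) = poly (Ep (k + 3)) (x (k + 3)) / x (k + 2)"
proof -
  have i: "k + 3 + 1 = k + 4" "k + 3 - 1 = k + 2" by simp_all
  show ?thesis using x_next[of "k + 3"] unfolding i .
qed

lemma e_prev2: "x (k - 2) = poly (Ep (k - 1)) (x (k - 1)) / x k"
proof -
  have i: "k - 1 - 1 = k - 2" "k - 1 + 1 = k" by simp_all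
  show ?thesis using x_prev[of "k - 1"] unfolding i .
qed

lemma e_prev3: "x (k - 3) = poly (Ep (k - 2)) (x (k - 2)) / x (k - 1)"
proof -
  have i: "k - 2 - 1 = k - 3" "k - 2 + 1 = k - 1" by simp_all
  show ?thesis using x_prev[of "k - 2"] unfolding i .
qed

lemma m_next2: "x (k + 2) \<in> T k"
  unfolding e_next2 by (intro T_div T_poly T_gen Ep_RP)

lemma m_prev2: "x (k - 2) \<in> T k"
  unfolding e_prev2 by (intro T_div T_poly T_gen Ep_RP m_prev)

lemma m_next3: "x (k + 3) \<in> T k"
  unfolding e_next3 by (intro T_div T_poly T_gen Ep_RP m_next2)

lemma m_prev3: "x (k - 3) \<in> T k"
proof -
  have Hd: "poly (Ep k) (x k) \<noteq> 0" using x_prev[of k] x_nz[of "k - 1"] by auto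
  have i2: "k - 2 + 2 = k" by simp
  have refl: "z ^ Lv (k - 2) * poly (Ep (k - 2)) (inverse z) = Uv (k - 2) * poly (Ep k) z" if "z \<noteq> 0" for z
    using E_refl[OF that, of "k - 2"] unfolding i2 by (simp add: poly_Ep)
  have "poly (Ep (k - 2)) (poly (Ep (k - 1)) (poly (Ep k) (x k) / x (k + 1)) / x k) / (poly (Ep k) (x k) / x (k + 1)) \<in> T k"
    by (rule laurent3[OF T_rc T_R T_gen(1,3,2,4) x_nz x_nz Ep_RP Ep_RP Ep_RP Ep_coeff0 Uv_R refl Hd])
  then show ?thesis unfolding e_prev3 e_prev2 x_prev[of k] .
qed

lemma m_next4: "x (k + 4) \<in> T k"
proof -
  have Hd: "poly (Ep (k + 1)) (x (k + 1)) \<noteq> 0" using e_next2[of k] x_nz[of "k + 2"] by auto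
  have i5: "k + 3 + 2 = (k + 1) + 4" by simp
  have refl: "z ^ Lv (k + 3) * poly (Ep (k + 3)) (inverse z) = Uv (k + 3) * poly (Ep (k + 1)) z" if "z \<noteq> 0" for z
    using E_refl[OF that, of "k + 3"] unfolding i5 E_per by (simp add: poly_Ep)
  have "poly (Ep (k + 3)) (poly (Ep (k + 2)) (poly (Ep (k + 1)) (x (k + 1)) / x k) / x (k + 1)) / (poly (Ep (k + 1)) (x (k + 1)) / x k) \<in> T k"
    by (rule laurent3[OF T_rc T_R T_gen(3,1,4,2) x_nz x_nz Ep_RP Ep_RP Ep_RP Ep_coeff0 Uv_R refl Hd])
  then show ?thesis unfolding e_next4 e_next3 e_next2 .
qed

end

context CA
begin

lemma lemB:
  assumes ind: "indep R b a" and F: "F \<in> RP R" "coeff F 0 = 1" and c: "c = poly F a / b"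
    and S: "rc S" "R \<subseteq> S" "a \<in> S" "b \<in> S" "c \<in> S"
    and sub: "S \<subseteq> zp_alg l1 l2 p1 p2 {c, inverse c, a, inverse a}"
  shows "Q \<in> RPP R \<Longrightarrow> y = ev b a Q / b ^ M \<Longrightarrow> y \<in> zp_alg l1 l2 p1 p2 {c, inverse c, a, inverse a} \<Longrightarrow> y \<in> S"
proof (induction M arbitrary: Q y)
  case 0 then show ?case using ev_mem[OF S(1,2) _ S(4) S(3)] by simp
next
  case (Suc M)
  let ?T = "zp_alg l1 l2 p1 p2 {c, inverse c, a, inverse a}"
  have b0: "b \<noteq> 0" by (rule indep_nz1[OF rcR ind])
  have a0: "a \<noteq> 0" by (rule indep_nz2[OF rcR ind])
  have Fa0: "poly F a \<noteq> 0" using F(2) by (intro indep_poly_nz[OF rcR ind F(1)]) auto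
  have c0: "c \<noteq> 0" using c Fa0 b0 by simp
  from T_rep[OF c0 a0] Suc.prems(3) obtain P K M' where P: "P \<in> RPP R" "y = ev c a P / (c ^ K * a ^ M')"
    unfolding Tset_def by blast
  have "ev b a Q / (b ^ Suc M * a ^ 0) = ev c a P / (c ^ K * a ^ M')" using Suc.prems(2) P(2) by simp
  from ColCond[OF rcR ind F(1) F(2) c Suc.prems(1) P(1) this]
  obtain g where g: "g \<in> RP R" "coeff Q 0 = F ^ Suc M * g" by blast
  obtain q0 Q1 where QQ: "Q = pCons q0 Q1" by (cases Q)
  have q0: "poly q0 a = poly F a ^ Suc M * poly g a" using QQ g(2) by (simp add: poly_power)
  have Q1: "Q1 \<in> RPP R" using Suc.prems(1) QQ by (simp add: RPP_pCons_iff)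
  have yy: "y = c ^ Suc M * poly g a + ev b a Q1 / b ^ M"
  proof -
    have "y = (poly q0 a + b * ev b a Q1) / b ^ Suc M" using Suc.prems(2) QQ by simp
    also have "\<dots> = c ^ Suc M * poly g a + ev b a Q1 / b ^ M"
      unfolding q0 c using b0 by (simp add: power_divide field_simps)
    finally show ?thesis .
  qed
  have Tc: "rc ?T" "R \<subseteq> ?T" "c \<in> ?T" "a \<in> ?T" by (auto intro: zp_alg_rc zp_alg_R[THEN subsetD] zp_alg.gen)
  have cgT: "c ^ Suc M * poly g a \<in> ?T" by (intro rc_mult[OF Tc(1)] rc_power[OF Tc(1)] poly_mem[OF Tc(1,2) g(1)] Tc(3,4))
  have cgS: "c ^ Suc M * poly g a \<in> S" by (intro rc_mult[OF S(1)] rc_power[OF S(1)] poly_mem[OF S(1,2) g(1)] S(3,5))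
  have "ev b a Q1 / b ^ M = y - c ^ Suc M * poly g a" using yy by simp
  then have "ev b a Q1 / b ^ M \<in> ?T" using rc_diff[OF Tc(1) Suc.prems(3) cgT] by simp
  then have "ev b a Q1 / b ^ M \<in> S" by (rule Suc.IH[OF Q1 refl])
  then show ?case using yy rc_add[OF S(1) cgS] by simp
qed

lemma lemZ:
  assumes a0: "a \<noteq> 0" and b0: "b \<noteq> 0" and F: "F \<in> RP R" "coeff F 0 = 1" and G: "G \<in> RP R"
    and c: "c = poly F a / b" and d: "d = poly G b / a"
    and S: "rc S" "R \<subseteq> S" "b \<in> S" "c \<in> S" "d \<in> S"
  shows "h \<in> RP R \<Longrightarrow> \<exists>s0\<in>S. \<exists>Q' M'. Q' \<in> RPP R \<and> d ^ Suc L * poly h b / b ^ k = s0 + ev a b Q' / (a ^ L * b ^ M')"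
proof (induction k arbitrary: h)
  case 0
  have "d ^ Suc L * poly h b \<in> S" by (intro rc_mult[OF S(1)] rc_power[OF S(1)] poly_mem[OF S(1,2) 0] S(3,5))
  moreover have "(0::'a poly poly) \<in> RPP R" by (rule RPP_0[OF rcR])
  ultimately show ?case by (intro bexI[of _ "d ^ Suc L * poly h b"] exI[of _ 0] exI[of _ 0]) auto
next
  case (Suc k)
  obtain h0 h' where hh: "h = pCons h0 h'" by (cases h)
  have h0: "h0 \<in> R" and h': "h' \<in> RP R" using Suc.prems hh by (auto simp: RP_pCons_iff)
  obtain s1 Q1 M1 where IH: "s1 \<in> S" "Q1 \<in> RPP R" "d ^ Suc L * poly h' b / b ^ k = s1 + ev a b Q1 / (a ^ L * b ^ M1)"
    using Suc.IH[OF h'] by blast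
  obtain c0 phi where Fk: "F ^ Suc k = pCons c0 phi" by (cases "F ^ Suc k")
  have c01: "c0 = 1" using Fk F(2) coeff_0_power[of F "Suc k"] by simp
  have phi: "phi \<in> RP R" using RP_power[OF rcR F(1), of "Suc k"] Fk by (simp add: RP_pCons_iff)
  have Fa: "poly F a ^ Suc k = 1 + a * poly phi a"
    using arg_cong[OF Fk, of "\<lambda>p. poly p a"] c01 by (simp add: poly_power)
  define Qphi where "Qphi = smult (smult (- h0) (G ^ Suc L)) (map_poly (\<lambda>c. [:c:]) phi)"
  have Qphi: "Qphi \<in> RPP R" unfolding Qphi_def
    by (intro RPP_smult RP_smult rc_neg RP_power RPP_const_poly rcR h0 G phi)
  have evQ: "ev a b Qphi = - h0 * poly G b ^ Suc L * poly phi a"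
    unfolding Qphi_def by (simp add: ev_const_poly poly_power)
  have key: "d ^ Suc L / b ^ Suc k = c ^ Suc k * d ^ Suc L - poly phi a * poly G b ^ Suc L / (a ^ L * b ^ Suc k)"
  proof -
    have "c ^ Suc k * d ^ Suc L = poly F a ^ Suc k * poly G b ^ Suc L / (b ^ Suc k * a ^ Suc L)"
      unfolding c d by (simp add: power_divide)
    also have "\<dots> = (1 + a * poly phi a) * poly G b ^ Suc L / (b ^ Suc k * a ^ Suc L)" unfolding Fa ..
    also have "\<dots> = d ^ Suc L / b ^ Suc k + poly phi a * poly G b ^ Suc L / (a ^ L * b ^ Suc k)"
      unfolding d using a0 b0 by (simp add: power_divide field_simps)
    finally show ?thesis by simp
  qed
  have "d ^ Suc L * poly h b / b ^ Suc k = h0 * (d ^ Suc L / b ^ Suc k) + d ^ Suc L * poly h' b / b ^ k"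
    unfolding hh using b0 by (simp add: field_simps)
  also have "\<dots> = (h0 * c ^ Suc k * d ^ Suc L + s1) +
      (ev a b Qphi / (a ^ L * b ^ Suc k) + ev a b Q1 / (a ^ L * b ^ M1))"
    unfolding key IH(3) evQ by (simp add: algebra_simps)
  also have "\<dots> = (h0 * c ^ Suc k * d ^ Suc L + s1) +
      ev a b (smult ([:0,1:] ^ M1) Qphi + smult ([:0,1:] ^ Suc k) Q1) / (a ^ L * b ^ (Suc k + M1))"
    unfolding Vadd[OF a0 b0] ..
  finally have eq: "d ^ Suc L * poly h b / b ^ Suc k = (h0 * c ^ Suc k * d ^ Suc L + s1) +
      ev a b (smult ([:0,1:] ^ M1) Qphi + smult ([:0,1:] ^ Suc k) Q1) / (a ^ L * b ^ (Suc k + M1))" .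
  have "h0 * c ^ Suc k * d ^ Suc L + s1 \<in> S"
    using h0 S by (intro rc_add[OF S(1)] rc_mult[OF S(1)] rc_power[OF S(1)] IH(1)) auto
  moreover have "smult ([:0,1:] ^ M1) Qphi + smult ([:0,1:] ^ Suc k) Q1 \<in> RPP R"
    by (intro RPP_add RPP_smult RP_power RP_X rcR Qphi IH(2))
  ultimately show ?case using eq by blast
qed

lemma lemA:
  assumes indab: "indep R a b" and indba: "indep R b a"
    and F: "F \<in> RP R" "coeff F 0 = 1" and G: "G \<in> RP R" "coeff G 0 = 1"
    and c: "c = poly F a / b" and d: "d = poly G b / a"
    and S: "rc S" "R \<subseteq> S" "a \<in> S" "b \<in> S" "c \<in> S" "d \<in> S"
    and sub1: "S \<subseteq> zp_alg l1 l2 p1 p2 {c, inverse c, a, inverse a}"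
    and sub2: "S \<subseteq> zp_alg l1 l2 p1 p2 {b, inverse b, d, inverse d}"
  shows "Q \<in> RPP R \<Longrightarrow> y = ev a b Q / (a ^ L * b ^ M) \<Longrightarrow> y \<in> zp_alg l1 l2 p1 p2 {c, inverse c, a, inverse a}
     \<Longrightarrow> y \<in> zp_alg l1 l2 p1 p2 {b, inverse b, d, inverse d} \<Longrightarrow> y \<in> S"
proof (induction L arbitrary: Q M y)
  case 0
  have "y = ev b a (swapP Q) / b ^ M" using 0(2) ev_swapP[of b a Q] by simp
  then show ?case by (rule lemB[OF indba F c S(1,2,3,4,5) sub1 RPP_swapP[OF rcR 0(1)] _ 0(3)])
next
  case (Suc L)
  let ?T1 = "zp_alg l1 l2 p1 p2 {c, inverse c, a, inverse a}"
  let ?T2 = "zp_alg l1 l2 p1 p2 {b, inverse b, d, inverse d}"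
  have a0: "a \<noteq> 0" by (rule indep_nz1[OF rcR indab])
  have b0: "b \<noteq> 0" by (rule indep_nz2[OF rcR indab])
  have Gb0: "poly G b \<noteq> 0" using G(2) by (intro indep_poly_nz[OF rcR indab G(1)]) auto
  have d0: "d \<noteq> 0" using d Gb0 a0 by simp
  have "?T2 = zp_alg l1 l2 p1 p2 {d, inverse d, b, inverse b}" by (simp add: insert_commute)
  then obtain P K M' where P: "P \<in> RPP R" "y = ev d b P / (d ^ K * b ^ M')"
    using T_rep[OF d0 b0] Suc.prems(4) unfolding Tset_def by blast
  have "ev a b Q / (a ^ Suc L * b ^ M) = ev d b P / (d ^ K * b ^ M')" using Suc.prems(2) P(2) by simp
  from ColCond[OF rcR indab G(1) G(2) d Suc.prems(1) P(1) this]
  obtain g where g: "g \<in> RP R" "coeff Q 0 = G ^ Suc L * g" by blast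
  obtain q0 Q1 where QQ: "Q = pCons q0 Q1" by (cases Q)
  have q0: "poly q0 b = poly G b ^ Suc L * poly g b" using QQ g(2) by (simp add: poly_power)
  have Q1: "Q1 \<in> RPP R" using Suc.prems(1) QQ by (simp add: RPP_pCons_iff)
  have yy: "y = d ^ Suc L * poly g b / b ^ M + ev a b Q1 / (a ^ L * b ^ M)"
  proof -
    have "y = (poly q0 b + a * ev a b Q1) / (a ^ Suc L * b ^ M)" using Suc.prems(2) QQ by simp
    also have "\<dots> = d ^ Suc L * poly g b / b ^ M + ev a b Q1 / (a ^ L * b ^ M)"
      unfolding q0 d using a0 b0 by (simp add: power_divide field_simps)
    finally show ?thesis .
  qed
  obtain s0 Q' M'' where Z: "s0 \<in> S" "Q' \<in> RPP R" "d ^ Suc L * poly g b / b ^ M = s0 + ev a b Q' / (a ^ L * b ^ M'')"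
    using lemZ[OF a0 b0 F G(1) c d S(1,2,4,5,6) g(1), of L M] by blast
  define Q3 where "Q3 = smult ([:0,1:] ^ M) Q' + smult ([:0,1:] ^ M'') Q1"
  have Q3: "Q3 \<in> RPP R" unfolding Q3_def by (intro RPP_add RPP_smult RP_power RP_X rcR Z(2) Q1)
  have yy2: "y = s0 + ev a b Q3 / (a ^ L * b ^ (M'' + M))"
    unfolding yy Z(3) Q3_def Vadd[OF a0 b0, symmetric] by simp
  have T1: "rc ?T1" and T2: "rc ?T2" by (rule zp_alg_rc)+
  have e: "y - s0 = ev a b Q3 / (a ^ L * b ^ (M'' + M))" using yy2 by simp
  have "y - s0 \<in> ?T1" using rc_diff[OF T1 Suc.prems(3)] sub1 Z(1) by auto
  moreover have "y - s0 \<in> ?T2" using rc_diff[OF T2 Suc.prems(4)] sub2 Z(1) by auto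
  ultimately have "y - s0 \<in> S" by (rule Suc.IH[OF Q3 e])
  then have "(y - s0) + s0 \<in> S" by (rule rc_add[OF S(1) _ Z(1)])
  then show ?case by simp
qed

definition Sm :: "int \<Rightarrow> 'a set" where
  "Sm m = zp_alg l1 l2 p1 p2 {x (m - 1), x m, x (m + 1), x (m + 2)}"

lemma Sm_rc: "rc (Sm m)" unfolding Sm_def by (rule zp_alg_rc)
lemma Sm_R: "R \<subseteq> Sm m" unfolding Sm_def by (rule zp_alg_R)
lemma Sm_gen: "x (m - 1) \<in> Sm m" "x m \<in> Sm m" "x (m + 1) \<in> Sm m" "x (m + 2) \<in> Sm m"
  unfolding Sm_def by (auto intro: zp_alg.gen)

lemma Sm_sub: "x (m - 1) \<in> T j \<Longrightarrow> x m \<in> T j \<Longrightarrow> x (m + 1) \<in> T j \<Longrightarrow> x (m + 2) \<in> T j \<Longrightarrow> Sm m \<subseteq> T j"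
  unfolding Sm_def by (rule zp_alg_min[OF T_rc _ T_R]) auto

lemma Sm_sub_Tm1: "Sm m \<subseteq> T (m - 1)"
proof -
  have i: "m - 1 + 1 = m" "m - 1 + 2 = m + 1" "m - 1 + 3 = m + 2" by simp_all
  show ?thesis by (rule Sm_sub[OF T_gen(1)[of "m - 1"] T_gen(3)[of "m - 1", unfolded i(1)]
       m_next2[of "m - 1", unfolded i(2)] m_next3[of "m - 1", unfolded i(3)]])
qed

lemma Sm_sub_Tm: "Sm m \<subseteq> T m"
  by (rule Sm_sub[OF m_prev T_gen(1) T_gen(3) m_next2])

lemma Sm_sub_Tp1: "Sm m \<subseteq> T (m + 1)"
proof -
  have i: "m + 1 - 2 = m - 1" "m + 1 - 1 = m" "m + 1 + 1 = m + 2" by simp_all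
  show ?thesis by (rule Sm_sub[OF m_prev2[of "m + 1", unfolded i(1)] m_prev[of "m + 1", unfolded i(2)]
       T_gen(1)[of "m + 1"] T_gen(3)[of "m + 1", unfolded i(3)]])
qed

lemma Sm_sub_Tp2: "Sm m \<subseteq> T (m + 2)"
proof -
  have i: "m + 2 - 3 = m - 1" "m + 2 - 2 = m" "m + 2 - 1 = m + 1" by simp_all
  show ?thesis by (rule Sm_sub[OF m_prev3[of "m + 2", unfolded i(1)] m_prev2[of "m + 2", unfolded i(2)]
       m_prev[of "m + 2", unfolded i(3)] T_gen(1)[of "m + 2"]])
qed

lemma Sm_next_sub_Tm1: "Sm (m + 1) \<subseteq> T (m - 1)"
proof -
  have i: "m + 1 - 1 = m" "m + 1 + 1 = m + 2" "m + 1 + 2 = m + 3"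
     "m - 1 + 1 = m" "m - 1 + 2 = m + 1" "m - 1 + 3 = m + 2" "m - 1 + 4 = m + 3" by simp_all
  show ?thesis unfolding Sm_def i(1,2,3)
    by (rule zp_alg_min[OF T_rc _ T_R])
       (use T_gen(3)[of "m - 1", unfolded i(4)] m_next2[of "m - 1", unfolded i(5)]
            m_next3[of "m - 1", unfolded i(6)] m_next4[of "m - 1", unfolded i(7)] in auto)
qed

definition Um :: "int \<Rightarrow> 'a set" where
  "Um m = T (m - 1) \<inter> T m \<inter> T (m + 1)"

lemma E1: "Um m \<subseteq> Sm m"
proof
  fix y assume y: "y \<in> Um m"
  define a where "a = x m"
  define b where "b = x (m + 1)"
  define c where "c = x (m - 1)"
  define d where "d = x (m + 2)"
  have indab: "indep R a b" unfolding a_def b_def by (rule indep_all)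
  have indba: "indep R b a" by (rule indep_sym[OF rcR indab])
  have c_eq: "c = poly (Ep m) a / b" unfolding a_def b_def c_def by (rule x_prev)
  have d_eq: "d = poly (Ep (m + 1)) b / a" unfolding a_def b_def d_def by (rule e_next2)
  have T1: "T (m - 1) = zp_alg l1 l2 p1 p2 {c, inverse c, a, inverse a}"
    unfolding T_eq a_def c_def by simp
  have T2: "T (m + 1) = zp_alg l1 l2 p1 p2 {b, inverse b, d, inverse d}"
    unfolding T_eq b_def d_def by (simp add: add.assoc)
  have T0: "T m = zp_alg l1 l2 p1 p2 {a, inverse a, b, inverse b}"
    unfolding T_eq a_def b_def by simp
  have S: "rc (Sm m)" "R \<subseteq> Sm m" "a \<in> Sm m" "b \<in> Sm m" "c \<in> Sm m" "d \<in> Sm m"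
    unfolding a_def b_def c_def d_def by (rule Sm_rc Sm_R Sm_gen)+
  have a0: "a \<noteq> 0" "b \<noteq> 0" unfolding a_def b_def by (rule x_nz)+
  from y have yT: "y \<in> T (m - 1)" "y \<in> T m" "y \<in> T (m + 1)" unfolding Um_def by auto
  obtain Q L M where Q: "Q \<in> RPP R" "y = ev a b Q / (a ^ L * b ^ M)"
    using T_rep[OF a0] yT(2) unfolding T0 Tset_def by blast
  show "y \<in> Sm m"
    by (rule lemA[OF indab indba Ep_RP Ep_coeff0 Ep_RP Ep_coeff0 c_eq d_eq S
          Sm_sub_Tm1[of m, unfolded T1] Sm_sub_Tp1[of m, unfolded T2] Q yT(1)[unfolded T1] yT(3)[unfolded T2]])
qed

lemma Um_eq: "Um m = Sm m"
  using E1 Sm_sub_Tm1 Sm_sub_Tm Sm_sub_Tp1 unfolding Um_def by blast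

lemma Sm_step: "Sm (m + 1) = Sm m"
proof
  have "Sm m \<subseteq> Um (m + 1)" unfolding Um_def using Sm_sub_Tm Sm_sub_Tp1 Sm_sub_Tp2
    by (simp add: add.assoc) 
  then show "Sm m \<subseteq> Sm (m + 1)" using Um_eq by simp
  have "Sm (m + 1) \<subseteq> Um m" unfolding Um_def using Sm_next_sub_Tm1 Um_eq[of "m + 1"]
    unfolding Um_def by (simp add: add.assoc) blast
  then show "Sm (m + 1) \<subseteq> Sm m" using Um_eq by simp
qed

lemma Sm_const: "Sm m = Sm 0"
proof (induction m rule: int_induct[where k=0])
  case base then show ?case by simp
next
  case (step1 i) then show ?case using Sm_step[of i] by simp
next
  case (step2 i) then show ?case using Sm_step[of "i - 1"] by simp
qed

lemma A_eq: "clusterA l1 l2 p1 p2 y1 y2 = Sm m"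
proof
  show "clusterA l1 l2 p1 p2 y1 y2 \<subseteq> Sm m"
    unfolding clusterA_def
  proof (rule zp_alg_min[OF Sm_rc _ Sm_R])
    show "range x \<subseteq> Sm m"
    proof
      fix z assume "z \<in> range x"
      then obtain j where "z = x j" by blast
      then show "z \<in> Sm m" using Sm_gen(2)[of j] Sm_const[of j] Sm_const[of m] by simp
    qed
  qed
  show "Sm m \<subseteq> clusterA l1 l2 p1 p2 y1 y2"
    unfolding clusterA_def Sm_def by (rule zp_alg_mono) auto
qed

lemma main:
  "clusterA l1 l2 p1 p2 y1 y2 = (\<Inter>k. T k) \<and>
   clusterA l1 l2 p1 p2 y1 y2 = T (m - 1) \<inter> T m \<inter> T (m + 1)"
proof
  have "clusterA l1 l2 p1 p2 y1 y2 \<subseteq> T k" for k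
    using A_eq[of k] Sm_sub_Tm[of k] by simp
  moreover have "(\<Inter>k. T k) \<subseteq> clusterA l1 l2 p1 p2 y1 y2"
    using A_eq[of 0] Um_eq[of 0] unfolding Um_def by blast
  ultimately show "clusterA l1 l2 p1 p2 y1 y2 = (\<Inter>k. T k)" by blast
  show "clusterA l1 l2 p1 p2 y1 y2 = T (m - 1) \<inter> T m \<inter> T (m + 1)"
    using A_eq[of m] Um_eq[of m] unfolding Um_def by simp
qed

end

theorem theoremA3:
  fixes l1 l2 :: nat and p1 p2 :: "nat \<Rightarrow> 'a::field_char_0" and y1 y2 :: 'a and m :: int
  assumes "l1 \<ge> 1" and "l2 \<ge> 1"
    and "alg_indep_Q (cvars l1 l2) (cval p1 p2 y1 y2)"
  shows "clusterA l1 l2 p1 p2 y1 y2 = (\<Inter>k. Tk l1 l2 p1 p2 y1 y2 k)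
       \<and> clusterA l1 l2 p1 p2 y1 y2 =
           Tk l1 l2 p1 p2 y1 y2 (m - 1) \<inter> Tk l1 l2 p1 p2 y1 y2 m \<inter> Tk l1 l2 p1 p2 y1 y2 (m + 1)"
proof -
  interpret CA l1 l2 p1 p2 y1 y2 using assms by unfold_locales
  show ?thesis by (rule main)
qed

end
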